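(* Under the standing assumptions below, assume in addition the Slater-type condition: there exists $\epsilon>0$ such that for every $s_0\in\mathcal S$, $x_0\in\mathcal X$ there is a $P$ feasible for the ex-ante lottery problem for $(x_0,s_0)$ with $\mathbb E^{a\sim P}_{s_0}\big(\sum_{t\ge0}\beta^tg^i(x(s^t),a(s^t),s_t)-\bar g^i\big)\ge\epsilon$ for all $i=1,\dots,I$. Then for every $x\in\mathcal X$, $s\in\mathcal S$, $\gamma\in\mathbb R^I_+$ there exists $\lambda^*\in\mathbb R^I_+$ attaining the infimum in $$\inf_{\lambda\in\mathbb R^I_+}\sup_{a\in\tilde{\mathcal A}(x,s)}\Big[r(x,a,s)+\sum_{i}\big(\gamma^ig^i(x,a,s)+\lambda^i(g^i(x,a,s)-\bar g^i)\big)+\beta\mathbb E_sD(\gamma+\lambda,\zeta(x,a,s),s')\Big].$$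
   Context: Setup. Let $\mathcal S$ be a finite set and $(s_t)_{t\ge0}$ a Markov chain on $\mathcal S$ with transition probabilities $\pi(s'|s)>0$ for all $s,s'\in\mathcal S$; for $s^t=(s_0,\dots,s_t)\in\mathcal S^{t+1}$ write $\pi^t(s^t|s_0)$ for its probability given $s_0$ and $\mathbb E_{s^t}$ (or $\mathbb E_{s_t}$) for expectation over future shocks given $s^t$; $\mathbb E_s$ denotes expectation over $s'\sim\pi(\cdot|s)$. Let $\mathcal A\subset\mathbb R^n$ be a finite set, $\mathcal X\subseteq\mathbb R^m$ a countable set, $\zeta:\mathcal X\times\mathcal A\times\mathcal S\to\mathcal X$, $p:\mathcal X\times\mathcal A\times\mathcal S\to\mathbb R$, $r,g^1,\dots,g^I$ bounded real functions on $\mathcal X\times\mathcal A\times\mathcal S$, $\bar g^i\in\mathbb R$, $\beta\in(0,1)$. A plan is $a=(a(s^t))_{t,s^t}$, $a(s^t)\in\mathcal A$, inducing $x(s^0)=x_0$, $x(s^{t+1})=\zeta(x(s^t),a(s^t),s_t)$. $\tilde{\mathcal A}(x,s)=\{a\in\mathcal A:p(x,a,s)\ge0\}$; $\tilde{\mathcal A}^\infty(x_0)$ is the set of plans with $a(s^t)\in\tilde{\mathcal A}(x(s^t),s_t)$ for all $t,s^t$. A plan is feasible for $(x_0,s_0)$ if it lies in $\tilde{\mathcal A}^\infty(x_0)$ and $\mathbb E_{s_t}\sum_{n\ge0}\beta^ng^i(x(s^{t+n}),a(s^{t+n}),s_{t+n})\ge\bar g^i$ for all $t,s^t,i$. Standing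 assumption: for every $(x_0,s_0)$ a feasible plan exists. Pre-action histories $h^t=(s_0,a_0,\dots,s_{t-1},a_{t-1},s_t)\in\mathcal H^t=\mathcal S^{t+1}\times\mathcal A^t$; a plan generates $h^t=(s_0,a(s^0),\dots,a(s^{t-1}),s_t)$ along $s^t$. Dual value: $\Lambda$ is the set of $(\lambda^i(h^t))_{t,h^t,i}$, $\lambda^i(h^t)\ge0$, $\sum_t\sum_{h^t}\sum_i\beta^t\lambda^i(h^t)\pi^t(s^t|s_0)<\infty$. $L(a,\lambda;\gamma,x_0,s_0)=\mathbb E_{s_0}\sum_t\beta^t\big[r(x(s^t),a(s^t),s_t)+\sum_i\gamma^ig^i(x(s^t),a(s^t),s_t)+\sum_i\lambda^i(h^t)(\sum_{n\ge0}\beta^ng^i(x(s^{t+n}),a(s^{t+n}),s_{t+n})-\bar g^i)\big]$ and $D(\gamma,x_0,s_0)=\inf_{\lambda\in\Lambda}\sup_{a\in\tilde{\mathcal A}^\infty(x_0)}L$. Ex-ante lottery problem. Give $\tilde{\mathcal A}^\infty(x_0)$ the product topology and let $\mathcal P(\tilde{\mathcal A}^\infty(x_0))$ be the set of Borel probability measures on it; a random plan $a\sim P$ is drawn independently of the shocks. $P$ is feasible for $(x_0,s_0)$ if for all $t\ge0$, all $h^t=(s_0,\tilde a_0,\dots,s_{t-1},\tilde a_{t-1},s_t)\in\mathcal H^t$ and all $i$, $\mathbb E^{a\sim P}_{s^t}\Big[\mathbf 1\{(a(s^0),\dots,a(s^{t-1}))=(\tilde a_0,\dots,\tilde a_{t-1})\}\Big(\sum_{n\ge0}\beta^ng^i(x(s^{t+n}),a(s^{t+n}),s_{t+n})-\bar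 g^i\Big)\Big]\ge0$, where $s^t$ is the shock history contained in $h^t$. *)

theory Defs
  imports "HOL-Probability.Probability"
begin

text \<open>Shock histories s^t = [s_0,...,s_t] are nonempty lists. pi s s' is pi(s'|s).\<close>

fun path_prob :: "('s \<Rightarrow> 's \<Rightarrow> real) \<Rightarrow> 's list \<Rightarrow> real" where
  "path_prob \<pi> (s # s' # ss) = \<pi> s s' * path_prob \<pi> (s' # ss)"
| "path_prob \<pi> _ = 1"

definition hists :: "'s \<Rightarrow> nat \<Rightarrow> 's list set" where
  "hists s0 t = {h. length h = Suc t \<and> hd h = s0}"

text \<open>State x(take (k+1) h) induced by plan a along history h.\<close>
primrec xk :: "('x \<Rightarrow> 'a \<Rightarrow> 's \<Rightarrow> 'x) \<Rightarrow> ('s list \<Rightarrow> 'a) \<Rightarrow> 'x \<Rightarrow> 's list \<Rightarrow> nat \<Rightarrow> 'x" where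
  "xk \<zeta> a x0 h 0 = x0"
| "xk \<zeta> a x0 h (Suc k) = \<zeta> (xk \<zeta> a x0 h k) (a (take (Suc k) h)) (h ! k)"

definition xof :: "('x \<Rightarrow> 'a \<Rightarrow> 's \<Rightarrow> 'x) \<Rightarrow> ('s list \<Rightarrow> 'a) \<Rightarrow> 'x \<Rightarrow> 's list \<Rightarrow> 'x" where
  "xof \<zeta> a x0 h = xk \<zeta> a x0 h (length h - 1)"

definition payoff :: "('x \<Rightarrow> 'a \<Rightarrow> 's \<Rightarrow> real) \<Rightarrow> ('x \<Rightarrow> 'a \<Rightarrow> 's \<Rightarrow> 'x) \<Rightarrow> ('s list \<Rightarrow> 'a) \<Rightarrow> 'x \<Rightarrow> 's list \<Rightarrow> real" where
  "payoff f \<zeta> a x0 h = f (xof \<zeta> a x0 h) (a h) (last h)"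

definition cont_exp :: "('s \<Rightarrow> 's \<Rightarrow> real) \<Rightarrow> 's list \<Rightarrow> nat \<Rightarrow> ('s list \<Rightarrow> real) \<Rightarrow> real" where
  "cont_exp \<pi> h n f = (\<Sum>c\<in>{c. length c = n}. path_prob \<pi> (last h # c) * f (h @ c))"

definition disc_cont :: "('x \<Rightarrow> 'a \<Rightarrow> 's \<Rightarrow> real) \<Rightarrow> ('x \<Rightarrow> 'a \<Rightarrow> 's \<Rightarrow> 'x) \<Rightarrow> real \<Rightarrow> ('s \<Rightarrow> 's \<Rightarrow> real)
    \<Rightarrow> ('s list \<Rightarrow> 'a) \<Rightarrow> 'x \<Rightarrow> 's list \<Rightarrow> real" where
  "disc_cont f \<zeta> \<beta> \<pi> a x0 h = (\<Sum>n. \<beta> ^ n * cont_exp \<pi> h n (payoff f \<zeta> a x0))"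

definition Atil :: "'a set \<Rightarrow> ('x \<Rightarrow> 'a \<Rightarrow> 's \<Rightarrow> real) \<Rightarrow> 'x \<Rightarrow> 's \<Rightarrow> 'a set" where
  "Atil A p x s = {a\<in>A. 0 \<le> p x a s}"

definition Atil_inf :: "'a set \<Rightarrow> ('x \<Rightarrow> 'a \<Rightarrow> 's \<Rightarrow> real) \<Rightarrow> ('x \<Rightarrow> 'a \<Rightarrow> 's \<Rightarrow> 'x) \<Rightarrow> 'x
    \<Rightarrow> ('s list \<Rightarrow> 'a) set" where
  "Atil_inf A p \<zeta> x0 = {a. \<forall>h. h \<noteq> [] \<longrightarrow> a h \<in> Atil A p (xof \<zeta> a x0 h) (last h)}"

definition feasible_plan :: "'a set \<Rightarrow> ('x \<Rightarrow> 'a \<Rightarrow> 's \<Rightarrow> real) \<Rightarrow> ('x \<Rightarrow> 'a \<Rightarrow> 's \<Rightarrow> 'x) \<Rightarrow> real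
    \<Rightarrow> ('s \<Rightarrow> 's \<Rightarrow> real) \<Rightarrow> ('i \<Rightarrow> 'x \<Rightarrow> 'a \<Rightarrow> 's \<Rightarrow> real) \<Rightarrow> ('i \<Rightarrow> real)
    \<Rightarrow> ('s list \<Rightarrow> 'a) \<Rightarrow> 'x \<Rightarrow> 's \<Rightarrow> bool" where
  "feasible_plan A p \<zeta> \<beta> \<pi> g gbar a x0 s0 \<longleftrightarrow>
     a \<in> Atil_inf A p \<zeta> x0 \<and>
     (\<forall>h i. h \<noteq> [] \<and> hd h = s0 \<longrightarrow> gbar i \<le> disc_cont (g i) \<zeta> \<beta> \<pi> a x0 h)"

text \<open>Action part of the pre-action history h^t generated by plan a along s^t.\<close>
definition act_hist :: "('s list \<Rightarrow> 'a) \<Rightarrow> 's list \<Rightarrow> 'a list" where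
  "act_hist a h = map (\<lambda>k. a (take (Suc k) h)) [0..<length h - 1]"

text \<open>The multiplier set Lambda (given s_0); h^t is represented as (s^t, [a_0..a_{t-1}]).\<close>
definition Lam :: "'a set \<Rightarrow> real \<Rightarrow> ('s \<Rightarrow> 's \<Rightarrow> real) \<Rightarrow> 's
    \<Rightarrow> ('i::finite \<Rightarrow> 's list \<times> 'a list \<Rightarrow> real) set" where
  "Lam A \<beta> \<pi> s0 = {lam. (\<forall>i h. 0 \<le> lam i h) \<and>
     summable (\<lambda>t. \<beta> ^ t * (\<Sum>sh\<in>hists s0 t. \<Sum>ah\<in>{ah. length ah = t \<and> set ah \<subseteq> A}.
                     \<Sum>i\<in>UNIV. lam i (sh, ah) * path_prob \<pi> sh))}"

definition Lag :: "('x \<Rightarrow> 'a \<Rightarrow> 's \<Rightarrow> real) \<Rightarrow> ('i::finite \<Rightarrow> 'x \<Rightarrow> 'a \<Rightarrow> 's \<Rightarrow> real) \<Rightarrow> ('i \<Rightarrow> real)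
    \<Rightarrow> ('x \<Rightarrow> 'a \<Rightarrow> 's \<Rightarrow> 'x) \<Rightarrow> real \<Rightarrow> ('s \<Rightarrow> 's \<Rightarrow> real) \<Rightarrow> ('i \<Rightarrow> real)
    \<Rightarrow> ('s list \<Rightarrow> 'a) \<Rightarrow> ('i \<Rightarrow> 's list \<times> 'a list \<Rightarrow> real) \<Rightarrow> 'x \<Rightarrow> 's \<Rightarrow> real" where
  "Lag r g gbar \<zeta> \<beta> \<pi> \<gamma> a lam x0 s0 =
     (\<Sum>t. \<beta> ^ t * (\<Sum>sh\<in>hists s0 t. path_prob \<pi> sh *
        (payoff r \<zeta> a x0 sh + (\<Sum>i\<in>UNIV. \<gamma> i * payoff (g i) \<zeta> a x0 sh)
         + (\<Sum>i\<in>UNIV. lam i (sh, act_hist a sh) * (disc_cont (g i) \<zeta> \<beta> \<pi> a x0 sh - gbar i)))))"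

definition Dval :: "'a set \<Rightarrow> ('x \<Rightarrow> 'a \<Rightarrow> 's \<Rightarrow> real) \<Rightarrow> ('x \<Rightarrow> 'a \<Rightarrow> 's \<Rightarrow> real)
    \<Rightarrow> ('i::finite \<Rightarrow> 'x \<Rightarrow> 'a \<Rightarrow> 's \<Rightarrow> real) \<Rightarrow> ('i \<Rightarrow> real)
    \<Rightarrow> ('x \<Rightarrow> 'a \<Rightarrow> 's \<Rightarrow> 'x) \<Rightarrow> real \<Rightarrow> ('s \<Rightarrow> 's \<Rightarrow> real) \<Rightarrow> ('i \<Rightarrow> real) \<Rightarrow> 'x \<Rightarrow> 's \<Rightarrow> ereal" where
  "Dval A p r g gbar \<zeta> \<beta> \<pi> \<gamma> x0 s0 =
     (INF lam\<in>Lam A \<beta> \<pi> s0. SUP a\<in>Atil_inf A p \<zeta> x0. ereal (Lag r g gbar \<zeta> \<beta> \<pi> \<gamma> a lam x0 s0))"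

text \<open>Feasible lottery: a probability measure on plans (product sigma-algebra of the
  discrete action set = Borel sigma-algebra of the product topology) concentrated on
  Atil_inf x0, satisfying the ex-ante constraints.\<close>
definition lottery_feasible :: "'a set \<Rightarrow> ('x \<Rightarrow> 'a \<Rightarrow> 's \<Rightarrow> real) \<Rightarrow> ('x \<Rightarrow> 'a \<Rightarrow> 's \<Rightarrow> 'x) \<Rightarrow> real
    \<Rightarrow> ('s \<Rightarrow> 's \<Rightarrow> real) \<Rightarrow> ('i \<Rightarrow> 'x \<Rightarrow> 'a \<Rightarrow> 's \<Rightarrow> real) \<Rightarrow> ('i \<Rightarrow> real)
    \<Rightarrow> ('s list \<Rightarrow> 'a) measure \<Rightarrow> 'x \<Rightarrow> 's \<Rightarrow> bool" where
  "lottery_feasible A p \<zeta> \<beta> \<pi> g gbar P x0 s0 \<longleftrightarrow>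
     prob_space P \<and> sets P = sets (Pi\<^sub>M UNIV (\<lambda>_. count_space A)) \<and>
     (AE a in P. a \<in> Atil_inf A p \<zeta> x0) \<and>
     (\<forall>t sh ah i. sh \<in> hists s0 t \<longrightarrow> length ah = t \<longrightarrow> set ah \<subseteq> A \<longrightarrow>
        0 \<le> (\<integral>a. (if act_hist a sh = ah then 1 else 0) *
                    (disc_cont (g i) \<zeta> \<beta> \<pi> a x0 sh - gbar i) \<partial>P))"

definition bellman_obj :: "'a set \<Rightarrow> ('x \<Rightarrow> 'a \<Rightarrow> 's \<Rightarrow> real) \<Rightarrow> ('x \<Rightarrow> 'a \<Rightarrow> 's \<Rightarrow> real)
    \<Rightarrow> ('i::finite \<Rightarrow> 'x \<Rightarrow> 'a \<Rightarrow> 's \<Rightarrow> real) \<Rightarrow> ('i \<Rightarrow> real)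
    \<Rightarrow> ('x \<Rightarrow> 'a \<Rightarrow> 's \<Rightarrow> 'x) \<Rightarrow> real \<Rightarrow> ('s::finite \<Rightarrow> 's \<Rightarrow> real) \<Rightarrow> ('i \<Rightarrow> real)
    \<Rightarrow> 'x \<Rightarrow> 's \<Rightarrow> ('i \<Rightarrow> real) \<Rightarrow> ereal" where
  "bellman_obj A p r g gbar \<zeta> \<beta> \<pi> \<gamma> x s lam =
     (SUP a\<in>Atil A p x s.
        ereal (r x a s + (\<Sum>i\<in>UNIV. \<gamma> i * g i x a s + lam i * (g i x a s - gbar i)))
        + ereal \<beta> * (\<Sum>s'\<in>UNIV. ereal (\<pi> s s') *
              Dval A p r g gbar \<zeta> \<beta> \<pi> (\<lambda>i. \<gamma> i + lam i) (\<zeta> x a s) s'))"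

end

theory Submission
  imports Defs
begin

lemma lists_len_finite: "finite {c::'s::finite list. length c = n}"
  using finite_lists_length_eq[of "UNIV::'s set" n] by simp

lemma lists_Suc: "{c::'s list. length c = Suc n} = (\<lambda>(y,c). y # c) ` (UNIV \<times> {c. length c = n})"
  by (auto simp: length_Suc_conv image_iff)

lemma path_prob_Cons2: "path_prob \<pi> (s # s' # c) = \<pi> s s' * path_prob \<pi> (s' # c)"
  by simp

lemma path_prob_nonneg: "(\<And>s s'. 0 \<le> \<pi> s s') \<Longrightarrow> 0 \<le> path_prob \<pi> l"
  by (induction \<pi> l rule: path_prob.induct) auto

lemma sum_lists_Suc:
  fixes F :: "'s::finite list \<Rightarrow> real"
  shows "(\<Sum>c\<in>{c. length c = Suc n}. F c) = (\<Sum>y\<in>UNIV. \<Sum>c\<in>{c. length c = n}. F (y # c))"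
proof -
  have inj: "inj_on (\<lambda>(y,c). y # c) (UNIV \<times> {c::'s list. length c = n})"
    by (auto simp: inj_on_def)
  have "(\<Sum>c\<in>{c. length c = Suc n}. F c) = (\<Sum>yc\<in>UNIV \<times> {c. length c = n}. F ((\<lambda>(y,c). y # c) yc))"
    unfolding lists_Suc by (rule sum.reindex[OF inj, unfolded comp_def])
  also have "\<dots> = (\<Sum>y\<in>UNIV. \<Sum>c\<in>{c. length c = n}. F (y # c))"
    by (simp add: sum.cartesian_product split_def)
  finally show ?thesis .
qed

lemma path_prob_sum:
  fixes \<pi> :: "'s::finite \<Rightarrow> 's \<Rightarrow> real"
  assumes "\<And>s. (\<Sum>s'\<in>UNIV. \<pi> s s') = 1"
  shows "(\<Sum>c\<in>{c. length c = n}. path_prob \<pi> (s # c)) = 1"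
proof (induction n arbitrary: s)
  case 0
  have "{c::'s list. length c = 0} = {[]}" by auto
  then show ?case by simp
next
  case (Suc n)
  have "(\<Sum>c\<in>{c. length c = Suc n}. path_prob \<pi> (s # c))
      = (\<Sum>y\<in>UNIV. \<Sum>c\<in>{c. length c = n}. \<pi> s y * path_prob \<pi> (y # c))"
    by (simp add: sum_lists_Suc)
  also have "\<dots> = (\<Sum>y\<in>UNIV. \<pi> s y)"
    by (simp add: sum_distrib_left[symmetric] Suc)
  finally show ?case using assms by simp
qed

lemma cont_exp_0: "cont_exp \<pi> h 0 F = F h"
proof -
  have "{c::'s list. length c = 0} = {[]}" by auto
  then show ?thesis by (simp add: cont_exp_def)
qed

lemma cont_exp_Suc:
  fixes \<pi> :: "'s::finite \<Rightarrow> 's \<Rightarrow> real"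
  shows "cont_exp \<pi> h (Suc n) F = (\<Sum>s'\<in>UNIV. \<pi> (last h) s' * cont_exp \<pi> (h @ [s']) n F)"
  unfolding cont_exp_def sum_lists_Suc
  by (simp add: sum_distrib_left mult.assoc)

lemma cont_exp_Cons:
  "h \<noteq> [] \<Longrightarrow> cont_exp \<pi> (s # h) n F = cont_exp \<pi> h n (\<lambda>l. F (s # l))"
  by (simp add: cont_exp_def)

lemma hists_eq: "hists s0 t = Cons s0 ` {c. length c = t}"
  by (auto simp: hists_def length_Suc_conv image_iff)

lemma sum_hists:
  fixes F :: "'s::finite list \<Rightarrow> real"
  shows "(\<Sum>sh\<in>hists s0 t. F sh) = (\<Sum>c\<in>{c. length c = t}. F (s0 # c))"
  unfolding hists_eq by (subst sum.reindex) (auto simp: inj_on_def)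

lemma finite_hists: "finite (hists (s0::'s::finite) t)"
  unfolding hists_eq using lists_len_finite by blast

lemma cont_exp_hists:
  fixes \<pi> :: "'s::finite \<Rightarrow> 's \<Rightarrow> real"
  shows "cont_exp \<pi> [s0] t F = (\<Sum>sh\<in>hists s0 t. path_prob \<pi> sh * F sh)"
  by (simp add: sum_hists cont_exp_def)


locale M5 =
  fixes \<pi> :: "'s::finite \<Rightarrow> 's \<Rightarrow> real"
    and A :: "'a set"
    and X :: "'x set"
    and \<zeta> :: "'x \<Rightarrow> 'a \<Rightarrow> 's \<Rightarrow> 'x"
    and p r :: "'x \<Rightarrow> 'a \<Rightarrow> 's \<Rightarrow> real"
    and g :: "'i::finite \<Rightarrow> 'x \<Rightarrow> 'a \<Rightarrow> 's \<Rightarrow> real"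
    and gbar :: "'i \<Rightarrow> real"
    and \<beta> :: real
    and Br Bg :: real
  assumes pi_nn: "\<And>s s'. 0 \<le> \<pi> s s'"
    and stoch: "\<And>s. (\<Sum>s'\<in>UNIV. \<pi> s s') = 1"
    and A_fin: "finite A"
    and zX: "\<And>x a s. x \<in> X \<Longrightarrow> a \<in> A \<Longrightarrow> \<zeta> x a s \<in> X"
    and rB: "\<And>x a s. x \<in> X \<Longrightarrow> a \<in> A \<Longrightarrow> \<bar>r x a s\<bar> \<le> Br"
    and gB: "\<And>i x a s. x \<in> X \<Longrightarrow> a \<in> A \<Longrightarrow> \<bar>g i x a s\<bar> \<le> Bg"
    and Br0: "0 \<le> Br" and Bg0: "0 \<le> Bg"
    and b0: "0 < \<beta>" and b1: "\<beta> < 1"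
begin

definition okA :: "('s list \<Rightarrow> 'a) \<Rightarrow> bool" where
  "okA a \<longleftrightarrow> (\<forall>h. h \<noteq> [] \<longrightarrow> a h \<in> A)"

definition shift :: "'s \<Rightarrow> ('s list \<Rightarrow> 'a) \<Rightarrow> 's list \<Rightarrow> 'a" where
  "shift s a = (\<lambda>h. a (s # h))"

abbreviation dc where "dc f a x0 h \<equiv> disc_cont f \<zeta> \<beta> \<pi> a x0 h"

lemma okA_shift: "okA a \<Longrightarrow> okA (shift s a)"
  by (simp add: okA_def shift_def)

lemma xk_X: "x0 \<in> X \<Longrightarrow> okA a \<Longrightarrow> k \<le> length h \<Longrightarrow> h \<noteq> [] \<or> k = 0 \<Longrightarrow> xk \<zeta> a x0 h k \<in> X"
proof (induction k)
  case 0 then show ?case by simp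
next
  case (Suc k)
  have "take (Suc k) h \<noteq> []" using Suc.prems by auto
  then have "a (take (Suc k) h) \<in> A" using Suc.prems by (simp add: okA_def)
  then show ?case using Suc by (simp add: zX)
qed

lemma xof_X: "x0 \<in> X \<Longrightarrow> okA a \<Longrightarrow> xof \<zeta> a x0 h \<in> X"
  unfolding xof_def by (cases "h = []") (auto intro: xk_X)

lemma payoff_bnd:
  assumes "\<And>x a s. x \<in> X \<Longrightarrow> a \<in> A \<Longrightarrow> \<bar>f x a s\<bar> \<le> B"
    and "x0 \<in> X" "okA a" "h \<noteq> []"
  shows "\<bar>payoff f \<zeta> a x0 h\<bar> \<le> B"
  using assms xof_X[OF assms(2,3)] unfolding payoff_def okA_def by blast

lemma cont_exp_bnd:
  assumes "\<And>c. length c = n \<Longrightarrow> \<bar>F (h @ c)\<bar> \<le> B"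
  shows "\<bar>cont_exp \<pi> h n F\<bar> \<le> B"
proof -
  have "\<bar>cont_exp \<pi> h n F\<bar> \<le> (\<Sum>c\<in>{c. length c = n}. \<bar>path_prob \<pi> (last h # c) * F (h @ c)\<bar>)"
    unfolding cont_exp_def by (rule sum_abs)
  also have "\<dots> \<le> (\<Sum>c\<in>{c. length c = n}. path_prob \<pi> (last h # c) * B)"
    by (rule sum_mono) (auto simp: abs_mult path_prob_nonneg[OF pi_nn] intro!: mult_left_mono assms)
  also have "\<dots> = B"
    by (simp add: sum_distrib_right[symmetric] path_prob_sum[OF stoch])
  finally show ?thesis .
qed

lemma dc_terms_bnd:
  assumes "\<And>x a s. x \<in> X \<Longrightarrow> a \<in> A \<Longrightarrow> \<bar>f x a s\<bar> \<le> B"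
    and "x0 \<in> X" "okA a" "h \<noteq> []"
  shows "\<bar>\<beta> ^ n * cont_exp \<pi> h n (payoff f \<zeta> a x0)\<bar> \<le> \<beta> ^ n * B"
proof -
  have "\<bar>cont_exp \<pi> h n (payoff f \<zeta> a x0)\<bar> \<le> B"
    by (rule cont_exp_bnd) (use assms in \<open>auto intro!: payoff_bnd\<close>)
  then show ?thesis using b0 by (simp add: abs_mult mult_left_mono)
qed

lemma dc_summable:
  assumes "\<And>x a s. x \<in> X \<Longrightarrow> a \<in> A \<Longrightarrow> \<bar>f x a s\<bar> \<le> B"
    and "x0 \<in> X" "okA a" "h \<noteq> []"
  shows "summable (\<lambda>n. \<beta> ^ n * cont_exp \<pi> h n (payoff f \<zeta> a x0))"
proof (rule summable_comparison_test')
  show "summable (\<lambda>n. \<beta> ^ n * B)" using b0 b1 by (simp add: summable_mult2)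
  show "norm (\<beta> ^ n * cont_exp \<pi> h n (payoff f \<zeta> a x0)) \<le> \<beta> ^ n * B" for n
    using dc_terms_bnd[OF assms] by simp
qed

lemma dc_bnd:
  assumes "\<And>x a s. x \<in> X \<Longrightarrow> a \<in> A \<Longrightarrow> \<bar>f x a s\<bar> \<le> B"
    and "x0 \<in> X" "okA a" "h \<noteq> []"
  shows "\<bar>dc f a x0 h\<bar> \<le> B / (1 - \<beta>)"
proof -
  have s1: "summable (\<lambda>n. \<bar>\<beta> ^ n * cont_exp \<pi> h n (payoff f \<zeta> a x0)\<bar>)"
    by (rule summable_comparison_test'[where g="\<lambda>n. \<beta> ^ n * B"])
       (use b0 b1 dc_terms_bnd[OF assms] in \<open>auto simp: summable_mult2\<close>)
  have s2: "summable (\<lambda>n. \<beta> ^ n * B)" using b0 b1 by (simp add: summable_mult2)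
  have "\<bar>dc f a x0 h\<bar> \<le> (\<Sum>n. \<bar>\<beta> ^ n * cont_exp \<pi> h n (payoff f \<zeta> a x0)\<bar>)"
    unfolding disc_cont_def by (rule summable_rabs[OF s1])
  also have "\<dots> \<le> (\<Sum>n. \<beta> ^ n * B)"
    by (rule suminf_le[OF _ s1 s2]) (use dc_terms_bnd[OF assms] in auto)
  also have "\<dots> = B / (1 - \<beta>)"
    using b0 b1 by (simp add: suminf_mult2[symmetric] suminf_geometric)
  finally show ?thesis .
qed

lemma rB': "x \<in> X \<Longrightarrow> a \<in> A \<Longrightarrow> \<bar>r x a s\<bar> \<le> Br" by (rule rB)
lemma gB': "x \<in> X \<Longrightarrow> a \<in> A \<Longrightarrow> \<bar>g i x a s\<bar> \<le> Bg" by (rule gB)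

lemma dc_rec:
  assumes "\<And>x a s. x \<in> X \<Longrightarrow> a \<in> A \<Longrightarrow> \<bar>f x a s\<bar> \<le> B"
    and "x0 \<in> X" "okA a" "h \<noteq> []"
  shows "dc f a x0 h = payoff f \<zeta> a x0 h + \<beta> * (\<Sum>s'\<in>UNIV. \<pi> (last h) s' * dc f a x0 (h @ [s']))"
proof -
  let ?T = "\<lambda>h n. \<beta> ^ n * cont_exp \<pi> h n (payoff f \<zeta> a x0)"
  have S: "summable (?T h')" if "h' \<noteq> []" for h' by (rule dc_summable[OF assms(1-3) that])
  have e0: "(\<Sum>n. ?T h (Suc n)) = (\<Sum>n. ?T h n) - ?T h 0"
    by (rule suminf_split_head[OF S[OF assms(4)]])
  have "dc f a x0 h = ?T h 0 + (\<Sum>n. ?T h (Suc n))"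
    unfolding disc_cont_def e0 by simp
  also have "(\<Sum>n. ?T h (Suc n)) = (\<Sum>n. \<beta> * (\<Sum>s'\<in>UNIV. \<pi> (last h) s' * ?T (h @ [s']) n))"
    by (simp add: cont_exp_Suc sum_distrib_left mult_ac)
  also have "\<dots> = \<beta> * (\<Sum>n. (\<Sum>s'\<in>UNIV. \<pi> (last h) s' * ?T (h @ [s']) n))"
    by (rule suminf_mult) (auto intro!: summable_sum summable_mult S)
  also have "(\<Sum>n. (\<Sum>s'\<in>UNIV. \<pi> (last h) s' * ?T (h @ [s']) n)) = (\<Sum>s'\<in>UNIV. \<Sum>n. \<pi> (last h) s' * ?T (h @ [s']) n)"
    by (rule suminf_sum) (auto intro!: summable_mult S)
  also have "\<dots> = (\<Sum>s'\<in>UNIV. \<pi> (last h) s' * dc f a x0 (h @ [s']))"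
    unfolding disc_cont_def by (intro sum.cong refl suminf_mult S) auto
  finally show ?thesis by (simp add: cont_exp_0)
qed

lemma xk_shift: "xk \<zeta> a x (s # l) (Suc k) = xk \<zeta> (shift s a) (\<zeta> x (a [s]) s) l k"
  by (induction k) (simp_all add: shift_def)

lemma xof_shift: "l \<noteq> [] \<Longrightarrow> xof \<zeta> a x (s # l) = xof \<zeta> (shift s a) (\<zeta> x (a [s]) s) l"
  unfolding xof_def by (cases l) (simp_all add: xk_shift[symmetric])

lemma payoff_shift: "l \<noteq> [] \<Longrightarrow> payoff f \<zeta> a x (s # l) = payoff f \<zeta> (shift s a) (\<zeta> x (a [s]) s) l"
  by (simp add: payoff_def xof_shift shift_def)

lemma cont_exp_cong: "(\<And>c. length c = n \<Longrightarrow> F (h @ c) = G (h @ c)) \<Longrightarrow> cont_exp \<pi>' h n F = cont_exp \<pi>' h n G"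
  unfolding cont_exp_def by (rule sum.cong) auto

lemma dc_shift: "l \<noteq> [] \<Longrightarrow> dc f a x (s # l) = dc f (shift s a) (\<zeta> x (a [s]) s) l"
  unfolding disc_cont_def cont_exp_Cons
  by (intro suminf_cong arg_cong2[where f="(*)"] refl cont_exp_cong) (simp add: payoff_shift)

lemma act_hist_shift: "l \<noteq> [] \<Longrightarrow> act_hist a (s # l) = a [s] # act_hist (shift s a) l"
proof -
  assume l: "l \<noteq> []"
  then obtain m where m: "length l = Suc m" by (cases l) auto
  have "[0..<Suc m] = 0 # map Suc [0..<m]" by (simp add: upt_conv_Cons map_Suc_upt)
  then show ?thesis using m unfolding act_hist_def shift_def by simp
qed

lemma Atil_inf_shift:
  "a \<in> Atil_inf A p \<zeta> x \<Longrightarrow> shift s a \<in> Atil_inf A p \<zeta> (\<zeta> x (a [s]) s)"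
proof -
  assume a: "a \<in> Atil_inf A p \<zeta> x"
  show ?thesis unfolding Atil_inf_def
  proof (intro CollectI allI impI)
    fix h :: "'s list" assume h: "h \<noteq> []"
    have "a (s # h) \<in> Atil A p (xof \<zeta> a x (s # h)) (last (s # h))"
      using a unfolding Atil_inf_def by blast
    then show "shift s a h \<in> Atil A p (xof \<zeta> (shift s a) (\<zeta> x (a [s]) s) h) (last h)"
      using h by (simp add: xof_shift shift_def)
  qed
qed

lemma Atil_inf_okA: "a \<in> Atil_inf A p \<zeta> x \<Longrightarrow> okA a"
  unfolding Atil_inf_def okA_def Atil_def by auto


definition Lt :: "nat \<Rightarrow> 'a list set" where
  "Lt t = {ah. length ah = t \<and> set ah \<subseteq> A}"

definition Cterm where
  "Cterm lam a x0 s0 t = (\<Sum>sh\<in>hists s0 t. path_prob \<pi> sh *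
      (\<Sum>i\<in>UNIV. lam i (sh, act_hist a sh) * (dc (g i) a x0 sh - gbar i)))"

definition Ls where
  "Ls lam s0 t = (\<Sum>sh\<in>hists s0 t. \<Sum>ah\<in>Lt t. \<Sum>i\<in>UNIV. lam i (sh, ah) * path_prob \<pi> sh)"

definition Kc where "Kc = Bg / (1 - \<beta>) + (\<Sum>i\<in>UNIV. \<bar>gbar i\<bar>)"

definition Kg where "Kg = Bg / (1 - \<beta>)"

lemma Kg_nn: "0 \<le> Kg" using Bg0 b1 by (simp add: Kg_def)
lemma Kc_nn: "0 \<le> Kc" using Bg0 b1 by (simp add: Kc_def sum_nonneg)

lemma finite_Lt: "finite (Lt t)"
  unfolding Lt_def using finite_lists_length_eq[OF A_fin, of t] by (simp add: conj_commute)

lemma act_hist_Lt: "okA a \<Longrightarrow> sh \<in> hists s0 t \<Longrightarrow> act_hist a sh \<in> Lt t"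
proof -
  assume a: "okA a" and sh: "sh \<in> hists s0 t"
  then have "sh \<noteq> []" by (auto simp: hists_def)
  then have "\<And>k. a (take (Suc k) sh) \<in> A" using a by (simp add: okA_def take_eq_Nil)
  then show ?thesis using sh unfolding Lt_def act_hist_def hists_def by auto
qed

lemma dcg_bnd: "x0 \<in> X \<Longrightarrow> okA a \<Longrightarrow> h \<noteq> [] \<Longrightarrow> \<bar>dc (g i) a x0 h - gbar i\<bar> \<le> Kc"
proof -
  assume *: "x0 \<in> X" "okA a" "h \<noteq> []"
  have "\<bar>dc (g i) a x0 h\<bar> \<le> Bg / (1 - \<beta>)" by (rule dc_bnd[OF gB' *])
  moreover have "\<bar>gbar i\<bar> \<le> (\<Sum>i\<in>UNIV. \<bar>gbar i\<bar>)"
    by (rule member_le_sum) auto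
  ultimately show ?thesis unfolding Kc_def by linarith
qed

lemma dcg_bnd': "x0 \<in> X \<Longrightarrow> okA a \<Longrightarrow> h \<noteq> [] \<Longrightarrow> \<bar>dc (g i) a x0 h\<bar> \<le> Kg"
  unfolding Kg_def by (rule dc_bnd[OF gB'])

lemma Lam_nn: "lam \<in> Lam A \<beta> \<pi> s0 \<Longrightarrow> 0 \<le> lam i h"
  unfolding Lam_def by (cases h) auto

lemma Lam_summable: "lam \<in> Lam A \<beta> \<pi> s0 \<Longrightarrow> summable (\<lambda>t. \<beta> ^ t * Ls lam s0 t)"
  unfolding Lam_def Ls_def Lt_def by auto

lemma Ls_nn: "lam \<in> Lam A \<beta> \<pi> s0 \<Longrightarrow> 0 \<le> Ls lam s0 t"
  unfolding Ls_def by (intro sum_nonneg mult_nonneg_nonneg Lam_nn path_prob_nonneg pi_nn)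

lemma Cterm_bnd:
  assumes lam: "lam \<in> Lam A \<beta> \<pi> s0" and a: "okA a" and x0: "x0 \<in> X"
  shows "\<bar>Cterm lam a x0 s0 t\<bar> \<le> Kc * Ls lam s0 t"
proof -
  have "\<bar>Cterm lam a x0 s0 t\<bar> \<le> (\<Sum>sh\<in>hists s0 t. \<bar>path_prob \<pi> sh *
      (\<Sum>i\<in>UNIV. lam i (sh, act_hist a sh) * (dc (g i) a x0 sh - gbar i))\<bar>)"
    unfolding Cterm_def by (rule sum_abs)
  also have "\<dots> \<le> (\<Sum>sh\<in>hists s0 t. path_prob \<pi> sh * (\<Sum>i\<in>UNIV. lam i (sh, act_hist a sh) * Kc))"
  proof (rule sum_mono)
    fix sh assume sh: "sh \<in> hists s0 t"
    then have ne: "sh \<noteq> []" by (auto simp: hists_def)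
    have "\<bar>\<Sum>i\<in>UNIV. lam i (sh, act_hist a sh) * (dc (g i) a x0 sh - gbar i)\<bar>
        \<le> (\<Sum>i\<in>UNIV. \<bar>lam i (sh, act_hist a sh) * (dc (g i) a x0 sh - gbar i)\<bar>)" by (rule sum_abs)
    also have "\<dots> \<le> (\<Sum>i\<in>UNIV. lam i (sh, act_hist a sh) * Kc)"
      by (rule sum_mono) (auto simp: abs_mult Lam_nn[OF lam] intro!: mult_left_mono dcg_bnd[OF x0 a ne])
    finally show "\<bar>path_prob \<pi> sh * (\<Sum>i\<in>UNIV. lam i (sh, act_hist a sh) * (dc (g i) a x0 sh - gbar i))\<bar>
        \<le> path_prob \<pi> sh * (\<Sum>i\<in>UNIV. lam i (sh, act_hist a sh) * Kc)"
      by (simp add: abs_mult path_prob_nonneg[OF pi_nn] mult_left_mono)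
  qed
  also have "\<dots> \<le> (\<Sum>sh\<in>hists s0 t. path_prob \<pi> sh * (Kc * (\<Sum>ah\<in>Lt t. \<Sum>i\<in>UNIV. lam i (sh, ah))))"
  proof (rule sum_mono)
    fix sh assume sh: "sh \<in> hists s0 t"
    have "(\<Sum>i\<in>UNIV. lam i (sh, act_hist a sh)) \<le> (\<Sum>ah\<in>Lt t. \<Sum>i\<in>UNIV. lam i (sh, ah))"
      by (rule member_le_sum[where f="\<lambda>ah. \<Sum>i\<in>UNIV. lam i (sh, ah)"])
         (auto intro!: sum_nonneg Lam_nn[OF lam] act_hist_Lt[OF a sh] finite_Lt)
    then have "(\<Sum>i\<in>UNIV. lam i (sh, act_hist a sh) * Kc) \<le> Kc * (\<Sum>ah\<in>Lt t. \<Sum>i\<in>UNIV. lam i (sh, ah))"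
      unfolding sum_distrib_right[symmetric] by (simp add: mult.commute[of _ Kc] mult_left_mono Kc_nn)
    then show "path_prob \<pi> sh * (\<Sum>i\<in>UNIV. lam i (sh, act_hist a sh) * Kc)
        \<le> path_prob \<pi> sh * (Kc * (\<Sum>ah\<in>Lt t. \<Sum>i\<in>UNIV. lam i (sh, ah)))"
      by (auto intro!: mult_left_mono path_prob_nonneg pi_nn)
  qed
  also have "\<dots> = Kc * Ls lam s0 t"
    unfolding Ls_def by (simp add: sum_distrib_left sum_distrib_right mult_ac)
  finally show ?thesis .
qed

lemma Cterm_summable:
  assumes lam: "lam \<in> Lam A \<beta> \<pi> s0" and a: "okA a" and x0: "x0 \<in> X"
  shows "summable (\<lambda>t. \<beta> ^ t * Cterm lam a x0 s0 t)"
proof (rule summable_comparison_test')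
  show "summable (\<lambda>t. Kc * (\<beta> ^ t * Ls lam s0 t))"
    by (rule summable_mult[OF Lam_summable[OF lam]])
  show "norm (\<beta> ^ t * Cterm lam a x0 s0 t) \<le> Kc * (\<beta> ^ t * Ls lam s0 t)" for t
    using Cterm_bnd[OF assms, of t] b0 by (simp add: abs_mult mult_left_mono mult_ac)
qed

lemma Cterm_suminf_bnd:
  assumes lam: "lam \<in> Lam A \<beta> \<pi> s0" and a: "okA a" and x0: "x0 \<in> X"
  shows "\<bar>\<Sum>t. \<beta> ^ t * Cterm lam a x0 s0 t\<bar> \<le> Kc * (\<Sum>t. \<beta> ^ t * Ls lam s0 t)"
proof -
  have s1: "summable (\<lambda>t. Kc * (\<beta> ^ t * Ls lam s0 t))"
    by (rule summable_mult[OF Lam_summable[OF lam]])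
  have b: "\<bar>\<beta> ^ t * Cterm lam a x0 s0 t\<bar> \<le> Kc * (\<beta> ^ t * Ls lam s0 t)" for t
    using Cterm_bnd[OF assms, of t] b0 by (simp add: abs_mult mult_left_mono mult_ac)
  have s0': "summable (\<lambda>t. \<bar>\<beta> ^ t * Cterm lam a x0 s0 t\<bar>)"
    by (rule summable_comparison_test'[OF s1]) (use b in auto)
  have "\<bar>\<Sum>t. \<beta> ^ t * Cterm lam a x0 s0 t\<bar> \<le> (\<Sum>t. \<bar>\<beta> ^ t * Cterm lam a x0 s0 t\<bar>)"
    by (rule summable_rabs[OF s0'])
  also have "\<dots> \<le> (\<Sum>t. Kc * (\<beta> ^ t * Ls lam s0 t))"
    by (rule suminf_le[OF b s0' s1])
  also have "\<dots> = Kc * (\<Sum>t. \<beta> ^ t * Ls lam s0 t)"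
    by (rule suminf_mult[OF Lam_summable[OF lam]])
  finally show ?thesis .
qed

lemma ce_summable:
  assumes "\<And>x a s. x \<in> X \<Longrightarrow> a \<in> A \<Longrightarrow> \<bar>f x a s\<bar> \<le> B" and "x0 \<in> X" "okA a"
  shows "summable (\<lambda>t. \<beta> ^ t * cont_exp \<pi> [s0] t (payoff f \<zeta> a x0))"
  using dc_summable[OF assms, where h="[s0]"] by simp

lemma Lag_split:
  assumes lam: "lam \<in> Lam A \<beta> \<pi> s0" and a: "okA a" and x0: "x0 \<in> X"
  shows "Lag r g gbar \<zeta> \<beta> \<pi> \<gamma> a lam x0 s0
       = dc r a x0 [s0] + (\<Sum>i\<in>UNIV. \<gamma> i * dc (g i) a x0 [s0]) + (\<Sum>t. \<beta> ^ t * Cterm lam a x0 s0 t)"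
proof -
  let ?R = "\<lambda>t. \<beta> ^ t * cont_exp \<pi> [s0] t (payoff r \<zeta> a x0)"
  let ?G = "\<lambda>i t. \<beta> ^ t * cont_exp \<pi> [s0] t (payoff (g i) \<zeta> a x0)"
  let ?C = "\<lambda>t. \<beta> ^ t * Cterm lam a x0 s0 t"
  have sw: "(\<Sum>sh\<in>hists s0 t. path_prob \<pi> sh * (\<Sum>i\<in>UNIV. \<gamma> i * payoff (g i) \<zeta> a x0 sh))
      = (\<Sum>i\<in>UNIV. \<gamma> i * (\<Sum>sh\<in>hists s0 t. path_prob \<pi> sh * payoff (g i) \<zeta> a x0 sh))" for t
    by (simp add: sum_distrib_left mult_ac sum.swap[of _ "hists s0 t"])
  have trm: "\<beta> ^ t * (\<Sum>sh\<in>hists s0 t. path_prob \<pi> sh *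
        (payoff r \<zeta> a x0 sh + (\<Sum>i\<in>UNIV. \<gamma> i * payoff (g i) \<zeta> a x0 sh)
         + (\<Sum>i\<in>UNIV. lam i (sh, act_hist a sh) * (disc_cont (g i) \<zeta> \<beta> \<pi> a x0 sh - gbar i))))
      = ?R t + (\<Sum>i\<in>UNIV. \<gamma> i * ?G i t) + ?C t" for t
    unfolding cont_exp_hists Cterm_def distrib_left sum.distrib sw
    by (simp add: sum_distrib_left mult_ac)
  have sR: "summable ?R" by (rule ce_summable[OF rB' x0 a])
  have sG: "summable (?G i)" for i by (rule ce_summable[OF gB' x0 a])
  have sGs: "summable (\<lambda>t. \<Sum>i\<in>UNIV. \<gamma> i * ?G i t)"
    by (intro summable_sum summable_mult sG)
  have sC: "summable ?C" by (rule Cterm_summable[OF assms])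
  have "Lag r g gbar \<zeta> \<beta> \<pi> \<gamma> a lam x0 s0 = (\<Sum>t. ?R t + (\<Sum>i\<in>UNIV. \<gamma> i * ?G i t) + ?C t)"
    unfolding Lag_def trm ..
  also have "\<dots> = (\<Sum>t. ?R t) + (\<Sum>t. \<Sum>i\<in>UNIV. \<gamma> i * ?G i t) + (\<Sum>t. ?C t)"
    by (simp add: suminf_add[symmetric] sR sGs sC summable_add)
  also have "(\<Sum>t. \<Sum>i\<in>UNIV. \<gamma> i * ?G i t) = (\<Sum>i\<in>UNIV. \<gamma> i * (\<Sum>t. ?G i t))"
    by (subst suminf_sum) (auto intro!: summable_mult sG suminf_mult sum.cong)
  finally show ?thesis unfolding disc_cont_def by simp
qed


definition PS :: "('s list \<Rightarrow> 'a) measure" where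
  "PS = Pi\<^sub>M UNIV (\<lambda>_. count_space A)"

lemma space_PS: "space PS = {a. \<forall>h. a h \<in> A}"
  by (auto simp: PS_def space_PiM PiE_UNIV_domain)

lemma space_PS_okA: "a \<in> space PS \<Longrightarrow> okA a"
  by (simp add: space_PS okA_def)

lemma space_PS_in: "a \<in> space PS \<Longrightarrow> a h \<in> A"
  by (simp add: space_PS)

lemma E_sets: "{a \<in> space PS. \<forall>k\<in>K. a k = \<phi> k} \<in> sets PS" if "finite K"
proof -
  have "{a \<in> space PS. \<forall>k\<in>K. a k = \<phi> k} = space PS \<inter> (\<Inter>k\<in>K. {a\<in>space PS. a k = \<phi> k})"
    by auto
  also have "\<dots> \<in> sets PS"
  proof (cases "K = {}")
    case True then show ?thesis by simp
  next
    case False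
    have "{a\<in>space PS. a k = \<phi> k} \<in> sets PS" for k
    proof -
      have m: "(\<lambda>a. a k) \<in> measurable PS (count_space A)"
        unfolding PS_def by (rule measurable_component_singleton) simp
      have "{a\<in>space PS. a k = \<phi> k} = (\<lambda>a. a k) -` (A \<inter> {\<phi> k}) \<inter> space PS"
        by (auto simp: space_PS)
      also have "\<dots> \<in> sets PS" by (rule measurable_sets[OF m]) simp
      finally show ?thesis .
    qed
    then show ?thesis using False that by (intro sets.Int sets.top sets.finite_INT) auto
  qed
  finally show ?thesis .
qed

lemma fin_dep_meas:
  fixes F :: "('s list \<Rightarrow> 'a) \<Rightarrow> real"
  assumes K: "finite K"
    and dep: "\<And>a b. a \<in> space PS \<Longrightarrow> b \<in> space PS \<Longrightarrow> (\<And>k. k \<in> K \<Longrightarrow> a k = b k) \<Longrightarrow> F a = F b"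
  shows "F \<in> borel_measurable PS"
proof -
  define \<Phi> where "\<Phi> = PiE K (\<lambda>_. A)"
  define E where "E \<phi> = {a \<in> space PS. \<forall>k\<in>K. a k = \<phi> k}" for \<phi>
  define sel where "sel \<phi> = (SOME b. b \<in> E \<phi>)" for \<phi>
  define G where "G a = (\<Sum>\<phi>\<in>\<Phi>. F (sel \<phi>) * indicator (E \<phi>) a)" for a
  have finPhi: "finite \<Phi>" unfolding \<Phi>_def using K A_fin by (simp add: finite_PiE)
  have G: "G \<in> borel_measurable PS"
    unfolding G_def E_def
    by (intro borel_measurable_sum borel_measurable_times borel_measurable_const
          borel_measurable_indicator E_sets[OF K])
  have "F a = G a" if a: "a \<in> space PS" for a
  proof -
    let ?\<phi> = "restrict a K"
    have phi: "?\<phi> \<in> \<Phi>" using a by (auto simp: \<Phi>_def space_PS)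
    have aE: "a \<in> E ?\<phi>" using a by (simp add: E_def)
    have notE: "a \<notin> E \<phi>" if "\<phi> \<in> \<Phi>" "\<phi> \<noteq> ?\<phi>" for \<phi>
    proof
      assume "a \<in> E \<phi>"
      then have "\<forall>k\<in>K. a k = \<phi> k" by (simp add: E_def)
      then have "\<phi> = ?\<phi>" using that(1) by (auto simp: \<Phi>_def PiE_def extensional_def)
      then show False using that(2) by simp
    qed
    have z: "(\<Sum>\<phi>\<in>\<Phi> - {?\<phi>}. F (sel \<phi>) * indicator (E \<phi>) a) = 0"
      by (rule sum.neutral) (use notE in auto)
    have "G a = F (sel ?\<phi>) * indicator (E ?\<phi>) a"
      unfolding G_def sum.remove[OF finPhi phi] z by simp
    also have "\<dots> = F (sel ?\<phi>)" using aE by simp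
    also have "sel ?\<phi> \<in> E ?\<phi>" unfolding sel_def using aE by (rule someI[where P="\<lambda>b. b \<in> E ?\<phi>"])
    then have "F (sel ?\<phi>) = F a"
      by (intro dep) (auto simp: E_def a)
    finally show ?thesis by simp
  qed
  then show ?thesis using G by (simp cong: measurable_cong)
qed

lemma xk_cong: "(\<And>k. k \<le> length h \<Longrightarrow> a (take k h) = b (take k h)) \<Longrightarrow> j \<le> length h \<Longrightarrow>
    xk \<zeta> a x0 h j = xk \<zeta> b x0 h j"
  by (induction j) auto

lemma payoff_meas: "(\<lambda>a. payoff f \<zeta> a x0 h) \<in> borel_measurable PS"
proof (rule fin_dep_meas[where K="(\<lambda>k. take k h) ` {..length h}"])
  fix a b :: "'s list \<Rightarrow> 'a" assume "\<And>k. k \<in> (\<lambda>k. take k h) ` {..length h} \<Longrightarrow> a k = b k"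
  then have ab: "\<And>k. k \<le> length h \<Longrightarrow> a (take k h) = b (take k h)" by auto
  have "a h = b h" using ab[of "length h"] by simp
  then show "payoff f \<zeta> a x0 h = payoff f \<zeta> b x0 h"
    unfolding payoff_def xof_def using xk_cong[where a=a and b=b and h=h, OF ab, of "length h - 1"] by simp
qed simp

lemma act_hist_cong: "(\<And>k. k \<le> length h \<Longrightarrow> a (take k h) = b (take k h)) \<Longrightarrow> act_hist a h = act_hist b h"
  unfolding act_hist_def by auto

lemma act_hist_meas: fixes F :: "'a list \<Rightarrow> real" shows "(\<lambda>a. F (act_hist a h)) \<in> borel_measurable PS"
proof (rule fin_dep_meas[where K="(\<lambda>k. take k h) ` {..length h}"])
  fix a b :: "'s list \<Rightarrow> 'a" assume "\<And>k. k \<in> (\<lambda>k. take k h) ` {..length h} \<Longrightarrow> a k = b k"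
  then have ab: "\<And>k. k \<le> length h \<Longrightarrow> a (take k h) = b (take k h)" by auto
  show "F (act_hist a h) = F (act_hist b h)" using act_hist_cong[where a=a and b=b and h=h, OF ab] by simp
qed simp

lemma dc_meas: "(\<lambda>a. dc f a x0 h) \<in> borel_measurable PS"
  unfolding disc_cont_def cont_exp_def
  by (intro borel_measurable_suminf borel_measurable_times borel_measurable_const
        borel_measurable_sum payoff_meas)

lemma Cterm_meas: "(\<lambda>a. Cterm lam a x0 s0 t) \<in> borel_measurable PS"
  unfolding Cterm_def
  by (intro borel_measurable_sum borel_measurable_times borel_measurable_const borel_measurable_diff
        dc_meas act_hist_meas[where F="\<lambda>ah. lam i (sh, ah)" for i sh])


lemma J_bnd:
  assumes "x0 \<in> X" "okA a"
  shows "\<bar>dc r a x0 [s0] + (\<Sum>i\<in>UNIV. \<gamma> i * dc (g i) a x0 [s0])\<bar>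
     \<le> Br / (1 - \<beta>) + (\<Sum>i\<in>UNIV. \<bar>\<gamma> i\<bar> * Kg)"
proof -
  have "\<bar>dc r a x0 [s0]\<bar> \<le> Br / (1 - \<beta>)" by (rule dc_bnd[OF rB' assms]) auto
  moreover have "\<bar>\<Sum>i\<in>UNIV. \<gamma> i * dc (g i) a x0 [s0]\<bar> \<le> (\<Sum>i\<in>UNIV. \<bar>\<gamma> i\<bar> * Kg)"
    by (rule order.trans[OF sum_abs sum_mono])
       (auto simp: abs_mult intro!: mult_left_mono dcg_bnd'[OF assms])
  ultimately show ?thesis by linarith
qed

lemma zero_Lam: "(\<lambda>i h. 0) \<in> Lam A \<beta> \<pi> s0"
  unfolding Lam_def by simp

lemma WD_real:
  fixes M :: "'b measure" and T :: "'b \<Rightarrow> 's list \<Rightarrow> 'a" and w :: "'b \<Rightarrow> real"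
  assumes x0: "x0 \<in> X" and ne: "Atil_inf A p \<zeta> x0 \<noteq> {}"
    and fm: "finite_measure M" and T: "T \<in> measurable M PS" and w: "w \<in> borel_measurable M"
    and w01: "\<And>x. x \<in> space M \<Longrightarrow> 0 \<le> w x \<and> w x \<le> 1"
    and AEw: "AE x in M. w x \<noteq> 0 \<longrightarrow> T x \<in> Atil_inf A p \<zeta> x0"
    and cons: "\<And>t sh ah i. sh \<in> hists s0 t \<Longrightarrow> length ah = t \<Longrightarrow> set ah \<subseteq> A \<Longrightarrow>
       0 \<le> (\<integral>x. w x * ((if act_hist (T x) sh = ah then 1 else 0) * (dc (g i) (T x) x0 sh - gbar i)) \<partial>M)"
    and lam: "lam \<in> Lam A \<beta> \<pi> s0"
  shows "\<exists>S. (SUP a\<in>Atil_inf A p \<zeta> x0. ereal (Lag r g gbar \<zeta> \<beta> \<pi> \<gamma> a lam x0 s0)) = ereal S \<and>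
     (\<integral>x. w x * (dc r (T x) x0 [s0] + (\<Sum>i\<in>UNIV. \<gamma> i * dc (g i) (T x) x0 [s0])) \<partial>M) \<le> (\<integral>x. w x \<partial>M) * S"
proof -
  interpret finite_measure M by (rule fm)
  define J where "J a = dc r a x0 [s0] + (\<Sum>i\<in>UNIV. \<gamma> i * dc (g i) a x0 [s0])" for a
  define KJ where "KJ = Br / (1 - \<beta>) + (\<Sum>i\<in>UNIV. \<bar>\<gamma> i\<bar> * Kg)"
  define LS where "LS = (\<Sum>t. \<beta> ^ t * Ls lam s0 t)"
  define Lg where "Lg a = Lag r g gbar \<zeta> \<beta> \<pi> \<gamma> a lam x0 s0" for a
  define f where "f t x = w x * (\<beta> ^ t * Cterm lam (T x) x0 s0 t)" for t x
  have okT: "okA (T x)" if "x \<in> space M" for x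
    using measurable_space[OF T that] by (rule space_PS_okA)
  have JB: "\<bar>J a\<bar> \<le> KJ" if "okA a" for a
    unfolding J_def KJ_def by (rule J_bnd[OF x0 that])
  have Jm: "J \<in> borel_measurable PS"
    unfolding J_def by (intro borel_measurable_add borel_measurable_sum borel_measurable_times
        borel_measurable_const dc_meas)
  have wJm: "(\<lambda>x. w x * J (T x)) \<in> borel_measurable M"
    by (intro borel_measurable_times w measurable_compose[OF T Jm])
  have int_wJ: "integrable M (\<lambda>x. w x * J (T x))"
  proof (rule integrable_const_bound[where B=KJ])
    show "AE x in M. norm (w x * J (T x)) \<le> KJ"
    proof (rule AE_I2)
      fix x assume x: "x \<in> space M"
      have "\<bar>w x\<bar> * \<bar>J (T x)\<bar> \<le> 1 * KJ"
        using w01[OF x] JB[OF okT[OF x]] by (intro mult_mono) auto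
      then show "norm (w x * J (T x)) \<le> KJ" by (simp add: abs_mult)
    qed
  qed (rule wJm)
  have Cm: "(\<lambda>x. Cterm lam (T x) x0 s0 t) \<in> borel_measurable M" for t
    by (rule measurable_compose[OF T Cterm_meas])
  have fbnd: "norm (f t x) \<le> Kc * (\<beta> ^ t * Ls lam s0 t)" if x: "x \<in> space M" for t x
  proof -
    have "\<bar>w x\<bar> * (\<beta> ^ t * \<bar>Cterm lam (T x) x0 s0 t\<bar>) \<le> 1 * (\<beta> ^ t * (Kc * Ls lam s0 t))"
      using w01[OF x] Cterm_bnd[OF lam okT[OF x] x0, of t] b0
      by (intro mult_mono mult_left_mono) auto
    then show ?thesis using b0 by (simp add: f_def abs_mult mult_ac)
  qed
  have int_f: "integrable M (f t)" for t
  proof (rule integrable_const_bound[where B="Kc * (\<beta> ^ t * Ls lam s0 t)"])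
    show "AE x in M. norm (f t x) \<le> Kc * (\<beta> ^ t * Ls lam s0 t)" by (rule AE_I2) (rule fbnd)
    show "f t \<in> borel_measurable M" unfolding f_def
      by (intro borel_measurable_times w borel_measurable_const Cm)
  qed
  have sumLS: "summable (\<lambda>t. Kc * (\<beta> ^ t * Ls lam s0 t))"
    by (rule summable_mult[OF Lam_summable[OF lam]])
  have ae_sum: "AE x in M. summable (\<lambda>t. norm (f t x))"
  proof (rule AE_I2)
    fix x assume x: "x \<in> space M"
    show "summable (\<lambda>t. norm (f t x))"
      by (rule summable_comparison_test'[OF sumLS]) (use fbnd[OF x] in simp)
  qed
  have int_norm_bnd: "norm (\<integral>x. norm (f t x) \<partial>M) \<le> measure M (space M) * (Kc * (\<beta> ^ t * Ls lam s0 t))" for t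
  proof -
    have "(\<integral>x. norm (f t x) \<partial>M) \<le> (\<integral>x. Kc * (\<beta> ^ t * Ls lam s0 t) \<partial>M)"
      by (rule integral_mono) (auto intro: int_f fbnd[unfolded real_norm_def])
    moreover have "0 \<le> (\<integral>x. norm (f t x) \<partial>M)" by simp
    ultimately show ?thesis by simp
  qed
  have sum_int: "summable (\<lambda>t. \<integral>x. norm (f t x) \<partial>M)"
    by (rule summable_comparison_test'[OF summable_mult[OF sumLS] int_norm_bnd])
  note SI = integrable_suminf[OF int_f ae_sum sum_int] integral_suminf[OF int_f ae_sum sum_int]
    summable_integral[OF int_f ae_sum sum_int]
  have f_nn: "0 \<le> integral\<^sup>L M (f t)" for t
  proof -
    define Y where "Y i sh ah x = w x * ((if act_hist (T x) sh = ah then 1 else 0) * (dc (g i) (T x) x0 sh - gbar i))"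
      for i sh ah x
    have Yint: "integrable M (Y i sh ah)" if sh: "sh \<in> hists s0 t" for i sh ah
    proof (rule integrable_const_bound[where B=Kc])
      show "AE x in M. norm (Y i sh ah x) \<le> Kc"
      proof (rule AE_I2)
        fix x assume x: "x \<in> space M"
        have ne: "sh \<noteq> []" using sh by (auto simp: hists_def)
        have "\<bar>w x\<bar> * ((if act_hist (T x) sh = ah then 1 else 0) * \<bar>dc (g i) (T x) x0 sh - gbar i\<bar>) \<le> 1 * (1 * Kc)"
          using w01[OF x] dcg_bnd[OF x0 okT[OF x] ne, of i] Kc_nn by (intro mult_mono) auto
        then show "norm (Y i sh ah x) \<le> Kc" by (simp add: Y_def abs_mult)
      qed
      show "Y i sh ah \<in> borel_measurable M" unfolding Y_def
        by (intro borel_measurable_times w borel_measurable_diff borel_measurable_const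
              measurable_compose[OF T dc_meas]
              measurable_compose[OF T act_hist_meas[where F="\<lambda>l. if l = ah then 1 else 0"]])
    qed
    have pt: "w x * Cterm lam (T x) x0 s0 t = (\<Sum>sh\<in>hists s0 t. \<Sum>i\<in>UNIV. \<Sum>ah\<in>Lt t.
               (path_prob \<pi> sh * lam i (sh, ah)) * Y i sh ah x)" if x: "x \<in> space M" for x
    proof -
      have d: "(\<Sum>ah\<in>Lt t. (path_prob \<pi> sh * lam i (sh, ah)) * Y i sh ah x)
          = path_prob \<pi> sh * (w x * (lam i (sh, act_hist (T x) sh) * (dc (g i) (T x) x0 sh - gbar i)))"
        if sh: "sh \<in> hists s0 t" for sh i
      proof -
        have "(\<Sum>ah\<in>Lt t. (path_prob \<pi> sh * lam i (sh, ah)) * Y i sh ah x)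
           = (\<Sum>ah\<in>Lt t. if act_hist (T x) sh = ah then path_prob \<pi> sh * lam i (sh, ah) *
                (w x * (dc (g i) (T x) x0 sh - gbar i)) else 0)"
          by (rule sum.cong) (auto simp: Y_def)
        also have "\<dots> = path_prob \<pi> sh * lam i (sh, act_hist (T x) sh) * (w x * (dc (g i) (T x) x0 sh - gbar i))"
          using act_hist_Lt[OF okT[OF x] sh] finite_Lt by (simp add: sum.delta)
        finally show ?thesis by (simp add: mult_ac)
      qed
      have "(\<Sum>sh\<in>hists s0 t. \<Sum>i\<in>UNIV. \<Sum>ah\<in>Lt t. (path_prob \<pi> sh * lam i (sh, ah)) * Y i sh ah x)
         = (\<Sum>sh\<in>hists s0 t. \<Sum>i\<in>UNIV. path_prob \<pi> sh * (w x * (lam i (sh, act_hist (T x) sh) * (dc (g i) (T x) x0 sh - gbar i))))"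
        by (intro sum.cong refl) (rule d)
      moreover have "w x * Cterm lam (T x) x0 s0 t = (\<Sum>sh\<in>hists s0 t. \<Sum>i\<in>UNIV. path_prob \<pi> sh * (w x * (lam i (sh, act_hist (T x) sh) * (dc (g i) (T x) x0 sh - gbar i))))"
        unfolding Cterm_def by (simp add: sum_distrib_left mult_ac)
      ultimately show ?thesis by simp
    qed
    have "(\<integral>x. w x * Cterm lam (T x) x0 s0 t \<partial>M) = (\<integral>x. (\<Sum>sh\<in>hists s0 t. \<Sum>i\<in>UNIV. \<Sum>ah\<in>Lt t.
               (path_prob \<pi> sh * lam i (sh, ah)) * Y i sh ah x) \<partial>M)"
      by (rule Bochner_Integration.integral_cong[OF refl]) (rule pt)
    also have "\<dots> = (\<Sum>sh\<in>hists s0 t. \<Sum>i\<in>UNIV. \<Sum>ah\<in>Lt t.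
               (path_prob \<pi> sh * lam i (sh, ah)) * (\<integral>x. Y i sh ah x \<partial>M))"
      by (simp add: Yint integrable_sum integral_sum)
    also have "\<dots> \<ge> 0"
      by (intro sum_nonneg mult_nonneg_nonneg path_prob_nonneg pi_nn Lam_nn[OF lam])
         (auto simp: Y_def Lt_def hists_def intro!: cons)
    finally have "0 \<le> (\<integral>x. w x * Cterm lam (T x) x0 s0 t \<partial>M)" .
    moreover have "integral\<^sup>L M (f t) = \<beta> ^ t * (\<integral>x. w x * Cterm lam (T x) x0 s0 t \<partial>M)"
      unfolding f_def by (simp add: mult.left_commute[of "w _"])
    ultimately show ?thesis using b0 by simp
  qed
  have pw: "w x * Lg (T x) = w x * J (T x) + (\<Sum>t. f t x)" if x: "x \<in> space M" for x
  proof -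
    have "(\<Sum>t. f t x) = w x * (\<Sum>t. \<beta> ^ t * Cterm lam (T x) x0 s0 t)"
      unfolding f_def by (rule suminf_mult[OF Cterm_summable[OF lam okT[OF x] x0]])
    then show ?thesis unfolding Lg_def J_def Lag_split[OF lam okT[OF x] x0] by (simp add: algebra_simps)
  qed
  have int_wL: "integrable M (\<lambda>x. w x * Lg (T x))"
    by (rule Bochner_Integration.integrable_cong[OF refl pw, THEN iffD2]) (auto intro: int_wJ SI)
  have intL: "(\<integral>x. w x * Lg (T x) \<partial>M) = (\<integral>x. w x * J (T x) \<partial>M) + (\<Sum>t. integral\<^sup>L M (f t))"
    by (subst Bochner_Integration.integral_cong[OF refl pw]) (auto simp: int_wJ SI)
  have L_ge: "(\<integral>x. w x * J (T x) \<partial>M) \<le> (\<integral>x. w x * Lg (T x) \<partial>M)"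
    unfolding intL using suminf_nonneg[OF SI(3) f_nn] by simp
  obtain a1 where a1: "a1 \<in> Atil_inf A p \<zeta> x0" using ne by auto
  define Sup where "Sup = (SUP a\<in>Atil_inf A p \<zeta> x0. ereal (Lg a))"
  have LgB: "Lg a \<le> KJ + Kc * LS" if "okA a" for a
  proof -
    have "Lg a = J a + (\<Sum>t. \<beta> ^ t * Cterm lam a x0 s0 t)"
      unfolding Lg_def J_def Lag_split[OF lam that x0] ..
    moreover have "J a \<le> KJ" using JB[OF that] by simp
    moreover have "(\<Sum>t. \<beta> ^ t * Cterm lam a x0 s0 t) \<le> Kc * LS"
      using Cterm_suminf_bnd[OF lam that x0] unfolding LS_def by simp
    ultimately show ?thesis by simp
  qed
  have Sup_le: "Sup \<le> ereal (KJ + Kc * LS)"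
    unfolding Sup_def by (rule SUP_least) (auto intro!: LgB Atil_inf_okA)
  have Sup_ge: "ereal (Lg a1) \<le> Sup"
    unfolding Sup_def by (rule SUP_upper[OF a1])
  define S where "S = real_of_ereal Sup"
  have SupS: "Sup = ereal S"
    unfolding S_def using Sup_le Sup_ge by (cases Sup) auto
  have ae_le: "AE x in M. w x * Lg (T x) \<le> w x * S"
    using AEw AE_space
  proof eventually_elim
    case (elim x)
    then have h: "w x \<noteq> 0 \<longrightarrow> T x \<in> Atil_inf A p \<zeta> x0" and x: "x \<in> space M" by auto
    show "w x * Lg (T x) \<le> w x * S"
    proof (cases "w x = 0")
      case False
      then have "ereal (Lg (T x)) \<le> Sup" unfolding Sup_def using h by (auto intro: SUP_upper)
      then have "Lg (T x) \<le> S" using SupS by simp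
      then show ?thesis using w01[OF x] by (simp add: mult_left_mono)
    qed simp
  qed
  have "(\<integral>x. w x * Lg (T x) \<partial>M) \<le> (\<integral>x. w x * S \<partial>M)"
    by (rule integral_mono_AE[OF int_wL _ ae_le]) (auto intro!: integrable_mult_left w
        integrable_const_bound[where B=1] simp: w01)
  then have "(\<integral>x. w x * J (T x) \<partial>M) \<le> (\<integral>x. w x \<partial>M) * S"
    using L_ge by simp
  then show ?thesis using SupS unfolding Sup_def Lg_def J_def by blast
qed


lemma WD:
  fixes M :: "'b measure" and T :: "'b \<Rightarrow> 's list \<Rightarrow> 'a" and w :: "'b \<Rightarrow> real"
  assumes x0: "x0 \<in> X" and ne: "Atil_inf A p \<zeta> x0 \<noteq> {}"
    and fm: "finite_measure M" and T: "T \<in> measurable M PS" and w: "w \<in> borel_measurable M"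
    and w01: "\<And>x. x \<in> space M \<Longrightarrow> 0 \<le> w x \<and> w x \<le> 1"
    and AEw: "AE x in M. w x \<noteq> 0 \<longrightarrow> T x \<in> Atil_inf A p \<zeta> x0"
    and cons: "\<And>t sh ah i. sh \<in> hists s0 t \<Longrightarrow> length ah = t \<Longrightarrow> set ah \<subseteq> A \<Longrightarrow>
       0 \<le> (\<integral>x. w x * ((if act_hist (T x) sh = ah then 1 else 0) * (dc (g i) (T x) x0 sh - gbar i)) \<partial>M)"
  shows "ereal (\<integral>x. w x * (dc r (T x) x0 [s0] + (\<Sum>i\<in>UNIV. \<gamma> i * dc (g i) (T x) x0 [s0])) \<partial>M)
     \<le> ereal (\<integral>x. w x \<partial>M) * Dval A p r g gbar \<zeta> \<beta> \<pi> \<gamma> x0 s0"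
proof -
  have W: "\<exists>S. (SUP a\<in>Atil_inf A p \<zeta> x0. ereal (Lag r g gbar \<zeta> \<beta> \<pi> \<gamma> a lam x0 s0)) = ereal S \<and>
     (\<integral>x. w x * (dc r (T x) x0 [s0] + (\<Sum>i\<in>UNIV. \<gamma> i * dc (g i) (T x) x0 [s0])) \<partial>M) \<le> (\<integral>x. w x \<partial>M) * S"
    if lam: "lam \<in> Lam A \<beta> \<pi> s0" for lam
    by (rule WD_real[OF x0 ne fm T w _ AEw _ lam]) (use w01 cons in auto)
  define I where "I = (\<integral>x. w x * (dc r (T x) x0 [s0] + (\<Sum>i\<in>UNIV. \<gamma> i * dc (g i) (T x) x0 [s0])) \<partial>M)"
  define \<mu> where "\<mu> = (\<integral>x. w x \<partial>M)"
  have mu0: "0 \<le> \<mu>" unfolding \<mu>_def by (rule Bochner_Integration.integral_nonneg) (use w01 in auto)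
  show ?thesis
  proof (cases "\<mu> = 0")
    case True
    obtain S where "I \<le> \<mu> * S" using W[OF zero_Lam] unfolding I_def \<mu>_def by blast
    then show ?thesis using True unfolding I_def[symmetric] \<mu>_def[symmetric] by (simp add: zero_ereal_def[symmetric])
  next
    case False
    then have mup: "0 < \<mu>" using mu0 by simp
    have "ereal (I / \<mu>) \<le> Dval A p r g gbar \<zeta> \<beta> \<pi> \<gamma> x0 s0"
      unfolding Dval_def
    proof (rule INF_greatest)
      fix lam :: "'i \<Rightarrow> 's list \<times> 'a list \<Rightarrow> real" assume lam: "lam \<in> Lam A \<beta> \<pi> s0"
      obtain S where S: "(SUP a\<in>Atil_inf A p \<zeta> x0. ereal (Lag r g gbar \<zeta> \<beta> \<pi> \<gamma> a lam x0 s0)) = ereal S"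
        and IS: "I \<le> \<mu> * S" using W[OF lam] unfolding I_def \<mu>_def by blast
      have "I / \<mu> \<le> S" using IS mup by (simp add: divide_le_eq mult.commute)
      then show "ereal (I / \<mu>) \<le> (SUP a\<in>Atil_inf A p \<zeta> x0. ereal (Lag r g gbar \<zeta> \<beta> \<pi> \<gamma> a lam x0 s0))"
        unfolding S by simp
    qed
    then have "ereal \<mu> * ereal (I / \<mu>) \<le> ereal \<mu> * Dval A p r g gbar \<zeta> \<beta> \<pi> \<gamma> x0 s0"
      by (rule ereal_mult_left_mono) (use mu0 in simp)
    then show ?thesis using mup unfolding I_def[symmetric] \<mu>_def[symmetric] by simp
  qed
qed

lemma D_upper:
  assumes x0: "x0 \<in> X"
  shows "Dval A p r g gbar \<zeta> \<beta> \<pi> \<gamma> x0 s0 \<le> ereal (Br / (1 - \<beta>) + (\<Sum>i\<in>UNIV. \<bar>\<gamma> i\<bar> * Kg))"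
proof -
  have "Dval A p r g gbar \<zeta> \<beta> \<pi> \<gamma> x0 s0 \<le> (SUP a\<in>Atil_inf A p \<zeta> x0. ereal (Lag r g gbar \<zeta> \<beta> \<pi> \<gamma> a (\<lambda>i h. 0) x0 s0))"
    unfolding Dval_def by (rule INF_lower[OF zero_Lam])
  also have "\<dots> \<le> ereal (Br / (1 - \<beta>) + (\<Sum>i\<in>UNIV. \<bar>\<gamma> i\<bar> * Kg))"
  proof (rule SUP_least)
    fix a assume a: "a \<in> Atil_inf A p \<zeta> x0"
    have ok: "okA a" by (rule Atil_inf_okA[OF a])
    have "Lag r g gbar \<zeta> \<beta> \<pi> \<gamma> a (\<lambda>i h. 0) x0 s0 = dc r a x0 [s0] + (\<Sum>i\<in>UNIV. \<gamma> i * dc (g i) a x0 [s0])"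
      unfolding Lag_split[OF zero_Lam ok x0] by (simp add: Cterm_def)
    then show "ereal (Lag r g gbar \<zeta> \<beta> \<pi> \<gamma> a (\<lambda>i h. 0) x0 s0) \<le> ereal (Br / (1 - \<beta>) + (\<Sum>i\<in>UNIV. \<bar>\<gamma> i\<bar> * Kg))"
      using J_bnd[OF x0 ok, of s0 \<gamma>] by simp
  qed
  finally show ?thesis .
qed

lemma D_lower:
  assumes x0: "x0 \<in> X" and ne: "Atil_inf A p \<zeta> x0 \<noteq> {}"
    and LF: "lottery_feasible A p \<zeta> \<beta> \<pi> g gbar P x0 s0"
  shows "ereal (\<integral>a. dc r a x0 [s0] + (\<Sum>i\<in>UNIV. \<gamma> i * dc (g i) a x0 [s0]) \<partial>P) \<le> Dval A p r g gbar \<zeta> \<beta> \<pi> \<gamma> x0 s0"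
proof -
  have ps: "prob_space P" and sP: "sets P = sets PS"
    and ae: "AE a in P. a \<in> Atil_inf A p \<zeta> x0"
    and cons: "\<And>t sh ah i. sh \<in> hists s0 t \<Longrightarrow> length ah = t \<Longrightarrow> set ah \<subseteq> A \<Longrightarrow>
        0 \<le> (\<integral>a. (if act_hist a sh = ah then 1 else 0) * (dc (g i) a x0 sh - gbar i) \<partial>P)"
    using LF unfolding lottery_feasible_def PS_def by auto
  interpret prob_space P by (rule ps)
  have "ereal (\<integral>x. 1 * (dc r ((\<lambda>x. x) x) x0 [s0] + (\<Sum>i\<in>UNIV. \<gamma> i * dc (g i) ((\<lambda>x. x) x) x0 [s0])) \<partial>P)
     \<le> ereal (\<integral>x. 1 \<partial>P) * Dval A p r g gbar \<zeta> \<beta> \<pi> \<gamma> x0 s0"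
    by (rule WD[OF x0 ne]) (auto intro: finite_measure_axioms measurable_ident_sets[OF sP] ae cons)
  then show ?thesis by (simp add: prob_space)
qed

end

locale M5S = M5 \<pi> A X \<zeta> p r g gbar \<beta> Br Bg
  for \<pi> :: "'s::finite \<Rightarrow> 's \<Rightarrow> real"
    and A :: "'a set"
    and X :: "'x set"
    and \<zeta> :: "'x \<Rightarrow> 'a \<Rightarrow> 's \<Rightarrow> 'x"
    and p r :: "'x \<Rightarrow> 'a \<Rightarrow> 's \<Rightarrow> real"
    and g :: "'i::finite \<Rightarrow> 'x \<Rightarrow> 'a \<Rightarrow> 's \<Rightarrow> real"
    and gbar :: "'i \<Rightarrow> real"
    and \<beta> :: real
    and Br Bg :: real +
  fixes \<epsilon> :: real
  assumes standing': "\<And>x0. x0 \<in> X \<Longrightarrow> Atil_inf A p \<zeta> x0 \<noteq> {}"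
    and eps: "0 < \<epsilon>"
    and slat: "\<And>s0 x0. x0 \<in> X \<Longrightarrow> \<exists>P. lottery_feasible A p \<zeta> \<beta> \<pi> g gbar P x0 s0 \<and>
                 (\<forall>i. \<epsilon> \<le> (\<integral>a. disc_cont (g i) \<zeta> \<beta> \<pi> a x0 [s0] - gbar i \<partial>P))"
begin

definition Dr where "Dr \<gamma> x0 s0 = real_of_ereal (Dval A p r g gbar \<zeta> \<beta> \<pi> \<gamma> x0 s0)"

lemma Dval_fin: "x0 \<in> X \<Longrightarrow> Dval A p r g gbar \<zeta> \<beta> \<pi> \<gamma> x0 s0 = ereal (Dr \<gamma> x0 s0)"
proof -
  assume x0: "x0 \<in> X"
  obtain P where P: "lottery_feasible A p \<zeta> \<beta> \<pi> g gbar P x0 s0" using slat[OF x0] by blast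
  have lo: "ereal (\<integral>a. dc r a x0 [s0] + (\<Sum>i\<in>UNIV. \<gamma> i * dc (g i) a x0 [s0]) \<partial>P) \<le> Dval A p r g gbar \<zeta> \<beta> \<pi> \<gamma> x0 s0"
    by (rule D_lower[OF x0 standing'[OF x0] P])
  have up: "Dval A p r g gbar \<zeta> \<beta> \<pi> \<gamma> x0 s0 \<le> ereal (Br / (1 - \<beta>) + (\<Sum>i\<in>UNIV. \<bar>\<gamma> i\<bar> * Kg))"
    by (rule D_upper[OF x0])
  show ?thesis unfolding Dr_def using lo up by (cases "Dval A p r g gbar \<zeta> \<beta> \<pi> \<gamma> x0 s0") auto
qed

lemma Lag_diff:
  assumes lam: "lam \<in> Lam A \<beta> \<pi> s0" and a: "a \<in> Atil_inf A p \<zeta> x0" and x0: "x0 \<in> X"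
  shows "Lag r g gbar \<zeta> \<beta> \<pi> \<gamma>1 a lam x0 s0 \<le> Lag r g gbar \<zeta> \<beta> \<pi> \<gamma>2 a lam x0 s0 + (\<Sum>i\<in>UNIV. \<bar>\<gamma>1 i - \<gamma>2 i\<bar>) * Kg"
proof -
  have ok: "okA a" by (rule Atil_inf_okA[OF a])
  have "(\<Sum>i\<in>UNIV. \<gamma>1 i * dc (g i) a x0 [s0]) - (\<Sum>i\<in>UNIV. \<gamma>2 i * dc (g i) a x0 [s0])
      = (\<Sum>i\<in>UNIV. (\<gamma>1 i - \<gamma>2 i) * dc (g i) a x0 [s0])"
    by (simp add: sum_subtractf[symmetric] left_diff_distrib)
  also have "\<dots> \<le> (\<Sum>i\<in>UNIV. \<bar>\<gamma>1 i - \<gamma>2 i\<bar> * Kg)"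
  proof (rule sum_mono)
    fix i
    have "(\<gamma>1 i - \<gamma>2 i) * dc (g i) a x0 [s0] \<le> \<bar>(\<gamma>1 i - \<gamma>2 i) * dc (g i) a x0 [s0]\<bar>" by simp
    also have "\<dots> \<le> \<bar>\<gamma>1 i - \<gamma>2 i\<bar> * Kg"
      unfolding abs_mult by (rule mult_left_mono[OF dcg_bnd'[OF x0 ok]]) auto
    finally show "(\<gamma>1 i - \<gamma>2 i) * dc (g i) a x0 [s0] \<le> \<bar>\<gamma>1 i - \<gamma>2 i\<bar> * Kg" .
  qed
  finally show ?thesis
    unfolding Lag_split[OF lam ok x0] by (simp add: sum_distrib_right)
qed

lemma Dr_lip:
  assumes x0: "x0 \<in> X"
  shows "Dr \<gamma>1 x0 s0 \<le> Dr \<gamma>2 x0 s0 + (\<Sum>i\<in>UNIV. \<bar>\<gamma>1 i - \<gamma>2 i\<bar>) * Kg"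
proof -
  define c where "c = (\<Sum>i\<in>UNIV. \<bar>\<gamma>1 i - \<gamma>2 i\<bar>) * Kg"
  have "ereal (Dr \<gamma>1 x0 s0 - c) \<le> Dval A p r g gbar \<zeta> \<beta> \<pi> \<gamma>2 x0 s0"
    unfolding Dval_def
  proof (rule INF_greatest)
    fix lam :: "'i::finite \<Rightarrow> 's list \<times> 'a list \<Rightarrow> real" assume lam: "lam \<in> Lam A \<beta> \<pi> s0"
    let ?S2 = "SUP a\<in>Atil_inf A p \<zeta> x0. ereal (Lag r g gbar \<zeta> \<beta> \<pi> \<gamma>2 a lam x0 s0)"
    have "ereal (Dr \<gamma>1 x0 s0) = Dval A p r g gbar \<zeta> \<beta> \<pi> \<gamma>1 x0 s0" by (rule Dval_fin[OF x0, symmetric])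
    also have "\<dots> \<le> (SUP a\<in>Atil_inf A p \<zeta> x0. ereal (Lag r g gbar \<zeta> \<beta> \<pi> \<gamma>1 a lam x0 s0))"
      unfolding Dval_def by (rule INF_lower[OF lam])
    also have "\<dots> \<le> ?S2 + ereal c"
    proof (rule SUP_least)
      fix a assume a: "a \<in> Atil_inf A p \<zeta> x0"
      have "ereal (Lag r g gbar \<zeta> \<beta> \<pi> \<gamma>1 a lam x0 s0) \<le> ereal (Lag r g gbar \<zeta> \<beta> \<pi> \<gamma>2 a lam x0 s0) + ereal c"
        using Lag_diff[OF lam a x0, of \<gamma>1 \<gamma>2] unfolding c_def by simp
      also have "\<dots> \<le> ?S2 + ereal c"
        by (intro add_right_mono SUP_upper a)
      finally show "ereal (Lag r g gbar \<zeta> \<beta> \<pi> \<gamma>1 a lam x0 s0) \<le> ?S2 + ereal c" .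
    qed
    finally have le: "ereal (Dr \<gamma>1 x0 s0) \<le> ?S2 + ereal c" .
    show "ereal (Dr \<gamma>1 x0 s0 - c) \<le> ?S2"
      using le by (cases ?S2) auto
  qed
  then show ?thesis unfolding Dval_fin[OF x0] c_def by simp
qed

definition imm where
  "imm \<gamma> lam x s a0 = r x a0 s + (\<Sum>i\<in>UNIV. \<gamma> i * g i x a0 s + lam i * (g i x a0 s - gbar i))"

definition Fa where
  "Fa \<gamma> x s lam a0 = imm \<gamma> lam x s a0 + \<beta> * (\<Sum>s'\<in>UNIV. \<pi> s s' * Dr (\<lambda>i. \<gamma> i + lam i) (\<zeta> x a0 s) s')"

definition fr where
  "fr \<gamma> x s lam = Max (Fa \<gamma> x s lam ` Atil A p x s)"

lemma Atil_fin: "finite (Atil A p x s)"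
  unfolding Atil_def using A_fin by simp

lemma Atil_ne: "x \<in> X \<Longrightarrow> Atil A p x s \<noteq> {}"
proof -
  assume x: "x \<in> X"
  obtain a where a: "a \<in> Atil_inf A p \<zeta> x" using standing'[OF x] by blast
  have "a [s] \<in> Atil A p (xof \<zeta> a x [s]) (last [s])" using a unfolding Atil_inf_def by blast
  then show ?thesis by (auto simp: xof_def)
qed

lemma Atil_sub: "Atil A p x s \<subseteq> A" unfolding Atil_def by auto

lemma bellman_eq:
  assumes x: "x \<in> X"
  shows "bellman_obj A p r g gbar \<zeta> \<beta> \<pi> \<gamma> x s lam = ereal (fr \<gamma> x s lam)"
proof -
  have t: "ereal (r x a s + (\<Sum>i\<in>UNIV. \<gamma> i * g i x a s + lam i * (g i x a s - gbar i)))
        + ereal \<beta> * (\<Sum>s'\<in>UNIV. ereal (\<pi> s s') *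
              Dval A p r g gbar \<zeta> \<beta> \<pi> (\<lambda>i. \<gamma> i + lam i) (\<zeta> x a s) s') = ereal (Fa \<gamma> x s lam a)"
    if a: "a \<in> Atil A p x s" for a
  proof -
    have xa: "\<zeta> x a s \<in> X" using a Atil_sub x zX by blast
    show ?thesis unfolding Dval_fin[OF xa] Fa_def imm_def by (simp add: sum_ereal)
  qed
  have "bellman_obj A p r g gbar \<zeta> \<beta> \<pi> \<gamma> x s lam = (SUP a\<in>Atil A p x s. ereal (Fa \<gamma> x s lam a))"
    unfolding bellman_obj_def by (rule SUP_cong[OF refl t])
  also have "\<dots> = ereal (fr \<gamma> x s lam)"
  proof (rule antisym)
    show "(SUP a\<in>Atil A p x s. ereal (Fa \<gamma> x s lam a)) \<le> ereal (fr \<gamma> x s lam)"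
      unfolding fr_def by (rule SUP_least) (simp add: Atil_fin)
    have "fr \<gamma> x s lam \<in> Fa \<gamma> x s lam ` Atil A p x s"
      unfolding fr_def by (rule Max_in) (auto simp: Atil_fin Atil_ne[OF x])
    then obtain a where "a \<in> Atil A p x s" "fr \<gamma> x s lam = Fa \<gamma> x s lam a" by auto
    then show "ereal (fr \<gamma> x s lam) \<le> (SUP a\<in>Atil A p x s. ereal (Fa \<gamma> x s lam a))"
      by (auto intro: SUP_upper)
  qed
  finally show ?thesis .
qed


definition nice :: "(('s list \<Rightarrow> 'a) \<Rightarrow> real) \<Rightarrow> bool" where
  "nice F \<longleftrightarrow> F \<in> borel_measurable PS \<and> (\<exists>B. \<forall>a\<in>space PS. \<bar>F a\<bar> \<le> B)"

lemma nice_const: "nice (\<lambda>a. c)"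
  unfolding nice_def by auto

lemma nice_add: "nice F \<Longrightarrow> nice G \<Longrightarrow> nice (\<lambda>a. F a + G a)"
  unfolding nice_def
proof (elim conjE exE, intro conjI)
  fix B1 B2 assume "\<forall>a\<in>space PS. \<bar>F a\<bar> \<le> B1" "\<forall>a\<in>space PS. \<bar>G a\<bar> \<le> B2"
  then show "\<exists>B. \<forall>a\<in>space PS. \<bar>F a + G a\<bar> \<le> B"
    by (intro exI[of _ "B1 + B2"]) (auto intro: order.trans[OF abs_triangle_ineq] add_mono)
qed auto

lemma nice_mult: "nice F \<Longrightarrow> nice G \<Longrightarrow> nice (\<lambda>a. F a * G a)"
  unfolding nice_def
proof (elim conjE exE, intro conjI)
  fix B1 B2 assume 1: "\<forall>a\<in>space PS. \<bar>F a\<bar> \<le> B1" and 2: "\<forall>a\<in>space PS. \<bar>G a\<bar> \<le> B2"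
  show "\<exists>B. \<forall>a\<in>space PS. \<bar>F a * G a\<bar> \<le> B"
  proof (intro exI[of _ "B1 * B2"] ballI)
    fix a assume a: "a \<in> space PS"
    show "\<bar>F a * G a\<bar> \<le> B1 * B2" unfolding abs_mult
      using 1 2 a by (intro mult_mono) (auto intro: order.trans[OF abs_ge_zero])
  qed
qed auto

lemma nice_diff: "nice F \<Longrightarrow> nice G \<Longrightarrow> nice (\<lambda>a. F a - G a)"
  using nice_add[of F "\<lambda>a. (-1) * G a"] nice_mult[OF nice_const, of G "-1"] by simp

lemma nice_sum: "finite I \<Longrightarrow> (\<And>i. i \<in> I \<Longrightarrow> nice (F i)) \<Longrightarrow> nice (\<lambda>a. \<Sum>i\<in>I. F i a)"
proof (induction I rule: finite_induct)
  case empty then show ?case by (simp add: nice_const)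
next
  case (insert i I) then show ?case by (simp add: nice_add)
qed

lemma nice_dc:
  assumes "\<And>x a s. x \<in> X \<Longrightarrow> a \<in> A \<Longrightarrow> \<bar>f x a s\<bar> \<le> B" and "x0 \<in> X" "h \<noteq> []"
  shows "nice (\<lambda>a. dc f a x0 h)"
proof -
  have "\<forall>a\<in>space PS. \<bar>dc f a x0 h\<bar> \<le> B / (1 - \<beta>)"
    using dc_bnd[where f=f and B=B, OF assms(1) assms(2) _ assms(3)] space_PS_okA by blast
  then show ?thesis unfolding nice_def by (auto intro!: dc_meas)
qed

lemma nice_dcr: "x0 \<in> X \<Longrightarrow> h \<noteq> [] \<Longrightarrow> nice (\<lambda>a. dc r a x0 h)"
  by (rule nice_dc[OF rB'])

lemma nice_dcg: "x0 \<in> X \<Longrightarrow> h \<noteq> [] \<Longrightarrow> nice (\<lambda>a. dc (g i) a x0 h)"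
  by (rule nice_dc[OF gB'])

lemma nice_w: fixes a0 :: 'a shows "nice (\<lambda>a. if a [s] = a0 then 1 else 0)"
  unfolding nice_def
proof (intro conjI)
  show "(\<lambda>a. if a [s] = a0 then 1 else 0::real) \<in> borel_measurable PS"
    by (rule fin_dep_meas[where K="{[s]}"]) auto
qed (auto intro: exI[of _ 1])

lemma nice_int:
  assumes "finite_measure P" "sets P = sets PS" "nice F"
  shows "integrable P F"
proof -
  interpret finite_measure P by (rule assms(1))
  have sp: "space P = space PS" by (rule sets_eq_imp_space_eq[OF assms(2)])
  obtain B where B: "\<forall>a\<in>space PS. \<bar>F a\<bar> \<le> B" and m: "F \<in> borel_measurable PS"
    using assms(3) unfolding nice_def by auto
  have m': "F \<in> borel_measurable P" by (subst measurable_cong_sets[OF assms(2) refl]) (rule m)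
  show ?thesis
    by (rule integrable_const_bound[where B=B]) (use B sp m' in auto)
qed

lemma shift_meas:
  assumes "sets P = sets PS"
  shows "shift s \<in> measurable P PS"
proof -
  have sp: "space P = space PS" by (rule sets_eq_imp_space_eq[OF assms])
  have c: "(\<lambda>a. a h) \<in> measurable P (count_space A)" for h
    by (subst measurable_cong_sets[OF assms refl]) (unfold PS_def, rule measurable_component_singleton, simp)
  show ?thesis unfolding PS_def
  proof (rule measurable_PiM_single')
    show "(\<lambda>a. shift s a h) \<in> measurable P (count_space A)" for h
      unfolding shift_def by (rule c)
    show "shift s \<in> space P \<rightarrow> (\<Pi>\<^sub>E i\<in>UNIV. space (count_space A))"
      using sp by (auto simp: space_PS shift_def)
  qed
qed

lemma dc_rec1:
  assumes "\<And>x a s. x \<in> X \<Longrightarrow> a \<in> A \<Longrightarrow> \<bar>f x a s\<bar> \<le> B" and "x \<in> X" "okA a"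
  shows "dc f a x [s] = f x (a [s]) s + \<beta> * (\<Sum>s'\<in>UNIV. \<pi> s s' * dc f a x [s, s'])"
  using dc_rec[OF assms, where h="[s]"] by (simp add: payoff_def xof_def)

end

context M5S
begin

lemma coerc:
  assumes x: "x \<in> X" and lam0: "\<And>i. 0 \<le> lam i"
  shows "- (Br / (1 - \<beta>) + (\<Sum>i\<in>UNIV. \<bar>\<gamma> i\<bar> * Kg)) + \<epsilon> * (\<Sum>i\<in>UNIV. lam i) \<le> fr \<gamma> x s lam"
proof -
  obtain P where LF: "lottery_feasible A p \<zeta> \<beta> \<pi> g gbar P x s"
    and Sl: "\<And>i. \<epsilon> \<le> (\<integral>a. dc (g i) a x [s] - gbar i \<partial>P)" using slat[OF x] by blast
  have ps: "prob_space P" and sP: "sets P = sets PS"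
    and ae: "AE a in P. a \<in> Atil_inf A p \<zeta> x"
    and cons: "\<And>t sh ah i. sh \<in> hists s t \<Longrightarrow> length ah = t \<Longrightarrow> set ah \<subseteq> A \<Longrightarrow>
        0 \<le> (\<integral>a. (if act_hist a sh = ah then 1 else 0) * (dc (g i) a x sh - gbar i) \<partial>P)"
    using LF unfolding lottery_feasible_def PS_def by auto
  interpret prob_space P by (rule ps)
  have fmP: "finite_measure P" by (rule finite_measure_axioms)
  have spP: "space P = space PS" by (rule sets_eq_imp_space_eq[OF sP])
  have intP: "integrable P F" if "nice F" for F by (rule nice_int[OF fmP sP that])
  have mP: "F \<in> borel_measurable P" if "nice F" for F
    using that unfolding nice_def by (subst measurable_cong_sets[OF sP refl]) auto
  define gl where "gl i = \<gamma> i + lam i" for i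
  define w where "w a0 a = (if a [s] = a0 then 1 else (0::real))" for a0 :: 'a and a :: "'s list \<Rightarrow> 'a"
  define q where "q a0 = integral\<^sup>L P (w a0)" for a0
  define Jss where "Jss s' a = dc r a x [s, s'] + (\<Sum>i\<in>UNIV. gl i * dc (g i) a x [s, s'])" for s' a
  define G where "G a0 a = imm \<gamma> lam x s a0 + \<beta> * (\<Sum>s'\<in>UNIV. \<pi> s s' * Jss s' a)" for a0 a
  define Jn where "Jn a = dc r a x [s] + (\<Sum>i\<in>UNIV. gl i * dc (g i) a x [s]) - (\<Sum>i\<in>UNIV. lam i * gbar i)" for a
  have nw: "nice (w a0)" for a0 unfolding w_def by (rule nice_w)
  have nJss: "nice (Jss s')" for s'
    unfolding Jss_def by (intro nice_add nice_sum nice_mult nice_const nice_dcr nice_dcg x) auto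
  have nG: "nice (G a0)" for a0
    unfolding G_def by (intro nice_add nice_sum nice_mult nice_const nJss) auto
  have nJn: "nice Jn"
    unfolding Jn_def by (intro nice_diff nice_add nice_sum nice_mult nice_const nice_dcr nice_dcg x) auto
  have step1: "Jn a = G (a [s]) a" if a: "a \<in> space PS" for a
  proof -
    have ok: "okA a" by (rule space_PS_okA[OF a])
    define R where "R = (\<Sum>s'\<in>UNIV. \<pi> s s' * dc r a x [s, s'])"
    define Gi where "Gi i = (\<Sum>s'\<in>UNIV. \<pi> s s' * dc (g i) a x [s, s'])" for i
    have er: "dc r a x [s] = r x (a [s]) s + \<beta> * R"
      unfolding R_def by (rule dc_rec1[OF rB' x ok])
    have eg: "dc (g i) a x [s] = g i x (a [s]) s + \<beta> * Gi i" for i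
      unfolding Gi_def by (rule dc_rec1[OF gB' x ok])
    have sw: "(\<Sum>s'\<in>UNIV. \<pi> s s' * Jss s' a) = R + (\<Sum>i\<in>UNIV. gl i * Gi i)"
    proof -
      have "(\<Sum>s'\<in>UNIV. \<pi> s s' * (\<Sum>i\<in>UNIV. gl i * dc (g i) a x [s, s']))
          = (\<Sum>s'\<in>UNIV. \<Sum>i\<in>UNIV. gl i * (\<pi> s s' * dc (g i) a x [s, s']))"
        by (simp add: sum_distrib_left mult.left_commute)
      also have "\<dots> = (\<Sum>i\<in>UNIV. \<Sum>s'\<in>UNIV. gl i * (\<pi> s s' * dc (g i) a x [s, s']))"
        by (rule sum.swap)
      also have "\<dots> = (\<Sum>i\<in>UNIV. gl i * Gi i)"
        by (simp add: Gi_def sum_distrib_left)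
      finally show ?thesis unfolding Jss_def R_def distrib_left sum.distrib by simp
    qed
    show ?thesis
    proof -
      have pi: "gl i * (g i x (a [s]) s + \<beta> * Gi i) = (\<gamma> i * g i x (a [s]) s + lam i * (g i x (a [s]) s - gbar i))
           + lam i * gbar i + \<beta> * (gl i * Gi i)" for i
        unfolding gl_def by (simp add: algebra_simps)
      have e: "(\<Sum>i\<in>UNIV. gl i * dc (g i) a x [s]) = (\<Sum>i\<in>UNIV. \<gamma> i * g i x (a [s]) s + lam i * (g i x (a [s]) s - gbar i))
           + (\<Sum>i\<in>UNIV. lam i * gbar i) + \<beta> * (\<Sum>i\<in>UNIV. gl i * Gi i)"
        by (simp only: eg pi sum.distrib sum_distrib_left)
      show ?thesis
        unfolding Jn_def G_def imm_def sw er e by (simp add: distrib_left)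
    qed
  qed
  have sumw: "(\<Sum>a0\<in>A. w a0 a * F a0) = F (a [s])" if a: "a \<in> space PS" for a and F :: "'a \<Rightarrow> real"
  proof -
    have "a [s] \<in> A" using a by (rule space_PS_in)
    moreover have "(\<Sum>a0\<in>A. w a0 a * F a0) = (\<Sum>a0\<in>A. if a [s] = a0 then F a0 else 0)"
      by (rule sum.cong) (auto simp: w_def)
    ultimately show ?thesis using A_fin by simp
  qed
  have step3: "(\<integral>a. Jn a \<partial>P) = (\<Sum>a0\<in>A. \<integral>a. w a0 a * G a0 a \<partial>P)"
  proof -
    have "(\<integral>a. Jn a \<partial>P) = (\<integral>a. (\<Sum>a0\<in>A. w a0 a * G a0 a) \<partial>P)"
      by (rule Bochner_Integration.integral_cong[OF refl]) (simp add: spP step1 sumw)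
    also have "\<dots> = (\<Sum>a0\<in>A. \<integral>a. w a0 a * G a0 a \<partial>P)"
      by (rule Bochner_Integration.integral_sum) (intro intP nice_mult nw nG)
    finally show ?thesis .
  qed
  have step4: "(\<integral>a. w a0 a * G a0 a \<partial>P) \<le> q a0 * Fa \<gamma> x s lam a0" if a0: "a0 \<in> A" for a0
  proof -
    define x' where "x' = \<zeta> x a0 s"
    have x': "x' \<in> X" unfolding x'_def using x a0 by (rule zX)
    have q0: "0 \<le> q a0" unfolding q_def w_def by (rule Bochner_Integration.integral_nonneg) auto
    have wd: "(\<integral>a. w a0 a * Jss s' a \<partial>P) \<le> q a0 * Dr gl x' s'" for s'
    proof -
      have eqJ: "w a0 a * (dc r (shift s a) x' [s'] + (\<Sum>i\<in>UNIV. gl i * dc (g i) (shift s a) x' [s']))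
          = w a0 a * Jss s' a" for a
        unfolding w_def Jss_def x'_def by (auto simp: dc_shift[symmetric])
      have AEw: "AE a in P. w a0 a \<noteq> 0 \<longrightarrow> shift s a \<in> Atil_inf A p \<zeta> x'"
        using ae by eventually_elim (auto simp: w_def x'_def dest: Atil_inf_shift[where s=s])
      have consw: "0 \<le> (\<integral>a. w a0 a * ((if act_hist (shift s a) sh = ah then 1 else 0) *
            (dc (g i) (shift s a) x' sh - gbar i)) \<partial>P)"
        if sh: "sh \<in> hists s' t" and ah: "length ah = t" "set ah \<subseteq> A" for t sh ah i
      proof -
        have ne: "sh \<noteq> []" using sh by (auto simp: hists_def)
        have "(\<integral>a. w a0 a * ((if act_hist (shift s a) sh = ah then 1 else 0) *
            (dc (g i) (shift s a) x' sh - gbar i)) \<partial>P)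
           = (\<integral>a. (if act_hist a (s # sh) = a0 # ah then 1 else 0) * (dc (g i) a x (s # sh) - gbar i) \<partial>P)"
          by (rule Bochner_Integration.integral_cong[OF refl])
             (auto simp: w_def x'_def act_hist_shift[OF ne] dc_shift[OF ne])
        also have "\<dots> \<ge> 0"
          by (rule cons) (use sh ah a0 in \<open>auto simp: hists_def\<close>)
        finally show ?thesis .
      qed
      have "ereal (\<integral>a. w a0 a * (dc r (shift s a) x' [s'] + (\<Sum>i\<in>UNIV. gl i * dc (g i) (shift s a) x' [s'])) \<partial>P)
          \<le> ereal (\<integral>a. w a0 a \<partial>P) * Dval A p r g gbar \<zeta> \<beta> \<pi> gl x' s'"
        by (rule WD[OF x' standing'[OF x'] fmP shift_meas[OF sP] mP[OF nw] _ AEw consw])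
           (auto simp: w_def)
      then show ?thesis unfolding eqJ Dval_fin[OF x'] q_def by simp
    qed
    have "(\<integral>a. w a0 a * G a0 a \<partial>P)
        = (\<integral>a. w a0 a * imm \<gamma> lam x s a0 + \<beta> * (\<Sum>s'\<in>UNIV. \<pi> s s' * (w a0 a * Jss s' a)) \<partial>P)"
      unfolding G_def by (simp add: distrib_left sum_distrib_left mult_ac)
    also have "\<dots> = q a0 * imm \<gamma> lam x s a0 + \<beta> * (\<Sum>s'\<in>UNIV. \<pi> s s' * (\<integral>a. w a0 a * Jss s' a \<partial>P))"
    proof -
      have i1: "integrable P (\<lambda>a. w a0 a * imm \<gamma> lam x s a0)" by (intro intP nice_mult nw nice_const)
      have i2: "integrable P (\<lambda>a. \<beta> * (\<Sum>s'\<in>UNIV. \<pi> s s' * (w a0 a * Jss s' a)))"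
        by (intro intP nice_mult nice_const nice_sum nw nJss) auto
      have isum: "(\<integral>a. (\<Sum>s'\<in>UNIV. \<pi> s s' * (w a0 a * Jss s' a)) \<partial>P) = (\<Sum>s'\<in>UNIV. \<pi> s s' * (\<integral>a. w a0 a * Jss s' a \<partial>P))"
        by (subst Bochner_Integration.integral_sum) (auto intro!: intP nice_mult nice_const nw nJss)
      show ?thesis
        unfolding Bochner_Integration.integral_add[OF i1 i2] q_def integral_mult_right_zero isum
        by simp
    qed
    also have "\<dots> \<le> q a0 * imm \<gamma> lam x s a0 + \<beta> * (\<Sum>s'\<in>UNIV. \<pi> s s' * (q a0 * Dr gl x' s'))"
      using b0 by (intro add_left_mono mult_left_mono sum_mono wd pi_nn) auto
    also have "\<dots> = q a0 * Fa \<gamma> x s lam a0"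
      unfolding Fa_def x'_def gl_def by (simp add: algebra_simps sum_distrib_left)
    finally show ?thesis .
  qed
  have qnn: "0 \<le> q a0" for a0 unfolding q_def w_def by (rule Bochner_Integration.integral_nonneg) auto
  have qsum: "(\<Sum>a0\<in>A. q a0) = 1"
  proof -
    have "(\<Sum>a0\<in>A. q a0) = (\<integral>a. (\<Sum>a0\<in>A. w a0 a * 1) \<partial>P)"
      unfolding q_def by (subst Bochner_Integration.integral_sum) (auto intro!: intP nw)
    also have "\<dots> = (\<integral>a. 1 \<partial>P)"
      by (rule Bochner_Integration.integral_cong[OF refl]) (use sumw[of _ "\<lambda>_. 1"] in \<open>simp add: spP\<close>)
    finally show ?thesis by (simp add: prob_space)
  qed
  have qzero: "q a0 = 0" if "a0 \<notin> Atil A p x s" for a0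
  proof -
    have "AE a in P. w a0 a = 0"
      using ae
    proof eventually_elim
      case (elim a)
      then have "a [s] \<in> Atil A p (xof \<zeta> a x [s]) (last [s])" unfolding Atil_inf_def by blast
      then have "a [s] \<in> Atil A p x s" by (simp add: xof_def)
      then show ?case using that by (auto simp: w_def)
    qed
    then show ?thesis unfolding q_def by (rule integral_eq_zero_AE)
  qed
  have step5: "(\<Sum>a0\<in>A. q a0 * Fa \<gamma> x s lam a0) \<le> fr \<gamma> x s lam"
  proof -
    have "(\<Sum>a0\<in>A. q a0 * Fa \<gamma> x s lam a0) \<le> (\<Sum>a0\<in>A. q a0 * fr \<gamma> x s lam)"
    proof (rule sum_mono)
      fix a0 assume a0: "a0 \<in> A"
      show "q a0 * Fa \<gamma> x s lam a0 \<le> q a0 * fr \<gamma> x s lam"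
      proof (cases "a0 \<in> Atil A p x s")
        case True
        then have "Fa \<gamma> x s lam a0 \<le> fr \<gamma> x s lam" unfolding fr_def by (simp add: Atil_fin)
        then show ?thesis using qnn by (simp add: mult_left_mono)
      next
        case False then show ?thesis by (simp add: qzero)
      qed
    qed
    also have "\<dots> = fr \<gamma> x s lam" by (simp add: sum_distrib_right[symmetric] qsum)
    finally show ?thesis .
  qed
  have step6: "- (Br / (1 - \<beta>) + (\<Sum>i\<in>UNIV. \<bar>\<gamma> i\<bar> * Kg)) + \<epsilon> * (\<Sum>i\<in>UNIV. lam i) \<le> (\<integral>a. Jn a \<partial>P)"
  proof -
    have ok: "okA a" if "a \<in> space P" for a using that spP space_PS_okA by simp
    have i1: "- (Br / (1 - \<beta>)) \<le> (\<integral>a. dc r a x [s] \<partial>P)"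
    proof -
      have "(\<integral>a. - (Br / (1 - \<beta>)) \<partial>P) \<le> (\<integral>a. dc r a x [s] \<partial>P)"
      proof (rule Bochner_Integration.integral_mono)
        show "- (Br / (1 - \<beta>)) \<le> dc r a x [s]" if "a \<in> space P" for a
          using dc_bnd[where f=r and B=Br and h="[s]", OF rB' x ok[OF that]] by simp
      qed (auto intro!: intP nice_dcr x)
      then show ?thesis by (simp add: prob_space)
    qed
    have i2: "- (\<bar>\<gamma> i\<bar> * Kg) \<le> \<gamma> i * (\<integral>a. dc (g i) a x [s] \<partial>P)" for i
    proof -
      have "\<bar>\<integral>a. dc (g i) a x [s] \<partial>P\<bar> \<le> (\<integral>a. \<bar>dc (g i) a x [s]\<bar> \<partial>P)"
        by (rule integral_abs_bound)
      also have "\<dots> \<le> (\<integral>a. Kg \<partial>P)"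
        by (rule Bochner_Integration.integral_mono) (auto intro!: intP nice_dcg x integrable_abs dcg_bnd'[OF x ok])
      also have "\<dots> = Kg" by (simp add: prob_space)
      finally have "\<bar>\<integral>a. dc (g i) a x [s] \<partial>P\<bar> \<le> Kg" .
      then have "\<bar>\<gamma> i * (\<integral>a. dc (g i) a x [s] \<partial>P)\<bar> \<le> \<bar>\<gamma> i\<bar> * Kg"
        unfolding abs_mult by (rule mult_left_mono) simp
      then show ?thesis by linarith
    qed
    have i3: "\<epsilon> \<le> (\<integral>a. dc (g i) a x [s] \<partial>P) - gbar i" for i
      using Sl[of i] by (subst (asm) Bochner_Integration.integral_diff) (auto intro!: intP nice_dcg x simp: prob_space)
    have "(\<integral>a. Jn a \<partial>P) = (\<integral>a. dc r a x [s] \<partial>P) + (\<Sum>i\<in>UNIV. \<gamma> i * (\<integral>a. dc (g i) a x [s] \<partial>P))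
          + (\<Sum>i\<in>UNIV. lam i * ((\<integral>a. dc (g i) a x [s] \<partial>P) - gbar i))"
    proof -
      define I where "I i = (\<integral>a. dc (g i) a x [s] \<partial>P)" for i
      have int1: "integrable P (\<lambda>a. dc r a x [s])" by (intro intP nice_dcr x) auto
      have int2: "integrable P (\<lambda>a. \<Sum>i\<in>UNIV. gl i * dc (g i) a x [s])"
        by (intro intP nice_sum nice_mult nice_const nice_dcg x) auto
      have int3: "integrable P (\<lambda>a. dc (g i) a x [s])" for i by (intro intP nice_dcg x) auto
      have e1: "(\<integral>a. Jn a \<partial>P) = (\<integral>a. dc r a x [s] \<partial>P) + (\<Sum>i\<in>UNIV. gl i * I i) - (\<Sum>i\<in>UNIV. lam i * gbar i)"
        unfolding Jn_def
        by (simp add: Bochner_Integration.integral_diff[OF Bochner_Integration.integrable_add[OF int1 int2]]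
            Bochner_Integration.integral_add[OF int1 int2] Bochner_Integration.integral_sum int3 I_def prob_space)
      have pi: "gl i * I i = \<gamma> i * I i + lam i * (I i - gbar i) + lam i * gbar i" for i
        unfolding gl_def by (simp add: algebra_simps)
      have e2: "(\<Sum>i\<in>UNIV. gl i * I i) = (\<Sum>i\<in>UNIV. \<gamma> i * I i) + (\<Sum>i\<in>UNIV. lam i * (I i - gbar i)) + (\<Sum>i\<in>UNIV. lam i * gbar i)"
        by (simp only: pi sum.distrib)
      have "(\<integral>a. Jn a \<partial>P) = (\<integral>a. dc r a x [s] \<partial>P) + (\<Sum>i\<in>UNIV. \<gamma> i * I i) + (\<Sum>i\<in>UNIV. lam i * (I i - gbar i))"
        using e1 e2 by linarith
      then show ?thesis unfolding I_def .
    qed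
    moreover have "(\<Sum>i\<in>UNIV. - (\<bar>\<gamma> i\<bar> * Kg)) \<le> (\<Sum>i\<in>UNIV. \<gamma> i * (\<integral>a. dc (g i) a x [s] \<partial>P))"
      by (rule sum_mono) (rule i2)
    moreover have "(\<Sum>i\<in>UNIV. lam i * \<epsilon>) \<le> (\<Sum>i\<in>UNIV. lam i * ((\<integral>a. dc (g i) a x [s] \<partial>P) - gbar i))"
      by (rule sum_mono) (rule mult_left_mono[OF i3 lam0])
    ultimately show ?thesis using i1
      by (simp add: sum_negf sum_distrib_right[symmetric] mult.commute[of \<epsilon>])
  qed
  have "(\<integral>a. Jn a \<partial>P) \<le> (\<Sum>a0\<in>A. q a0 * Fa \<gamma> x s lam a0)"
    unfolding step3 by (rule sum_mono) (rule step4)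
  then show ?thesis using step5 step6 by linarith
qed


definition Kf where "Kf = Bg + (\<Sum>i\<in>UNIV. \<bar>gbar i\<bar>) + \<beta> * Kg"

lemma Kf_nn: "0 \<le> Kf"
  unfolding Kf_def using Bg0 b0 Kg_nn by (simp add: sum_nonneg)

lemma Fa_lip:
  assumes x: "x \<in> X" and a0: "a0 \<in> Atil A p x s"
  shows "Fa \<gamma> x s l1 a0 \<le> Fa \<gamma> x s l2 a0 + Kf * (\<Sum>i\<in>UNIV. \<bar>l1 i - l2 i\<bar>)"
proof -
  have a0A: "a0 \<in> A" using a0 Atil_sub by blast
  have x': "\<zeta> x a0 s \<in> X" using zX[OF x a0A] .
  define d where "d = (\<Sum>i\<in>UNIV. \<bar>l1 i - l2 i\<bar>)"
  have gb: "\<bar>g i x a0 s - gbar i\<bar> \<le> Bg + (\<Sum>i\<in>UNIV. \<bar>gbar i\<bar>)" for i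
  proof -
    have "\<bar>gbar i\<bar> \<le> (\<Sum>i\<in>UNIV. \<bar>gbar i\<bar>)" by (rule member_le_sum) auto
    then show ?thesis using gB[OF x a0A, of i s] by linarith
  qed
  have i1: "imm \<gamma> l1 x s a0 - imm \<gamma> l2 x s a0 \<le> (Bg + (\<Sum>i\<in>UNIV. \<bar>gbar i\<bar>)) * d"
  proof -
    have "imm \<gamma> l1 x s a0 - imm \<gamma> l2 x s a0 = (\<Sum>i\<in>UNIV. (l1 i - l2 i) * (g i x a0 s - gbar i))"
      unfolding imm_def by (simp add: sum_subtractf[symmetric] algebra_simps)
    also have "\<dots> \<le> (\<Sum>i\<in>UNIV. \<bar>l1 i - l2 i\<bar> * (Bg + (\<Sum>i\<in>UNIV. \<bar>gbar i\<bar>)))"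
    proof (rule sum_mono)
      fix i
      have "(l1 i - l2 i) * (g i x a0 s - gbar i) \<le> \<bar>l1 i - l2 i\<bar> * \<bar>g i x a0 s - gbar i\<bar>"
        by (metis abs_ge_self abs_mult)
      also have "\<dots> \<le> \<bar>l1 i - l2 i\<bar> * (Bg + (\<Sum>i\<in>UNIV. \<bar>gbar i\<bar>))"
        by (rule mult_left_mono[OF gb]) simp
      finally show "(l1 i - l2 i) * (g i x a0 s - gbar i) \<le> \<bar>l1 i - l2 i\<bar> * (Bg + (\<Sum>i\<in>UNIV. \<bar>gbar i\<bar>))" .
    qed
    also have "\<dots> = (Bg + (\<Sum>i\<in>UNIV. \<bar>gbar i\<bar>)) * d"
      unfolding d_def sum_distrib_left by (simp add: mult.commute)
    finally show ?thesis .
  qed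
  have i2: "(\<Sum>s'\<in>UNIV. \<pi> s s' * Dr (\<lambda>i. \<gamma> i + l1 i) (\<zeta> x a0 s) s')
      \<le> (\<Sum>s'\<in>UNIV. \<pi> s s' * Dr (\<lambda>i. \<gamma> i + l2 i) (\<zeta> x a0 s) s') + d * Kg"
  proof -
    have "(\<Sum>s'\<in>UNIV. \<pi> s s' * Dr (\<lambda>i. \<gamma> i + l1 i) (\<zeta> x a0 s) s')
        \<le> (\<Sum>s'\<in>UNIV. \<pi> s s' * (Dr (\<lambda>i. \<gamma> i + l2 i) (\<zeta> x a0 s) s' + d * Kg))"
      by (rule sum_mono, rule mult_left_mono[OF _ pi_nn])
         (use Dr_lip[OF x', of "\<lambda>i. \<gamma> i + l1 i" _ "\<lambda>i. \<gamma> i + l2 i"] in \<open>simp add: d_def\<close>)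
    also have "\<dots> = (\<Sum>s'\<in>UNIV. \<pi> s s' * Dr (\<lambda>i. \<gamma> i + l2 i) (\<zeta> x a0 s) s') + d * Kg"
      by (simp add: distrib_left sum.distrib sum_distrib_right[symmetric] stoch)
    finally show ?thesis .
  qed
  have "\<beta> * (\<Sum>s'\<in>UNIV. \<pi> s s' * Dr (\<lambda>i. \<gamma> i + l1 i) (\<zeta> x a0 s) s')
      \<le> \<beta> * ((\<Sum>s'\<in>UNIV. \<pi> s s' * Dr (\<lambda>i. \<gamma> i + l2 i) (\<zeta> x a0 s) s') + d * Kg)"
    using b0 i2 by (simp add: mult_left_mono)
  then show ?thesis using i1 unfolding Fa_def Kf_def d_def[symmetric] by (simp add: algebra_simps)
qed

lemma fr_lip:
  assumes x: "x \<in> X"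
  shows "fr \<gamma> x s l1 \<le> fr \<gamma> x s l2 + Kf * (\<Sum>i\<in>UNIV. \<bar>l1 i - l2 i\<bar>)"
proof -
  have "fr \<gamma> x s l1 \<in> Fa \<gamma> x s l1 ` Atil A p x s"
    unfolding fr_def by (rule Max_in) (auto simp: Atil_fin Atil_ne[OF x])
  then obtain a where a: "a \<in> Atil A p x s" and e: "fr \<gamma> x s l1 = Fa \<gamma> x s l1 a" by auto
  have "Fa \<gamma> x s l2 a \<le> fr \<gamma> x s l2" unfolding fr_def using a by (simp add: Atil_fin)
  then show ?thesis using e Fa_lip[OF x a, of \<gamma> l1 l2] by linarith
qed

lemma attain:
  assumes x: "x \<in> X"
  shows "\<exists>l. (\<forall>i. 0 \<le> l i) \<and> (\<forall>l'. (\<forall>i. 0 \<le> l' i) \<longrightarrow> fr \<gamma> x s l \<le> fr \<gamma> x s l')"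
proof -
  define C0 where "C0 = Br / (1 - \<beta>) + (\<Sum>i\<in>UNIV. \<bar>\<gamma> i\<bar> * Kg)"
  define R where "R = (fr \<gamma> x s (\<lambda>i. 0) + C0) / \<epsilon>"
  have co: "- C0 + \<epsilon> * (\<Sum>i\<in>UNIV. l i) \<le> fr \<gamma> x s l" if "\<And>i. 0 \<le> l i" for l
    unfolding C0_def by (rule coerc[OF x that])
  have R0: "0 \<le> R" using co[of "\<lambda>i. 0"] eps unfolding R_def by simp
  define \<phi> where "\<phi> v = fr \<gamma> x s (\<lambda>i. v $ i)" for v :: "real ^ 'i"
  define S where "S = cbox (0::real^'i) (\<chi> i. R)"
  have memS: "v \<in> S \<longleftrightarrow> (\<forall>i. 0 \<le> v $ i \<and> v $ i \<le> R)" for v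
    unfolding S_def mem_box_cart by simp
  have lip: "dist (\<phi> v) (\<phi> w) \<le> (Kf * real CARD('i)) * dist v w" for v w
  proof -
    have sd: "(\<Sum>i\<in>UNIV. \<bar>v $ i - w $ i\<bar>) \<le> real CARD('i) * dist v w"
    proof -
      have "(\<Sum>i\<in>UNIV. \<bar>v $ i - w $ i\<bar>) \<le> (\<Sum>i\<in>(UNIV::'i set). dist v w)"
        by (rule sum_mono) (metis component_le_norm_cart dist_norm vector_minus_component)
      then show ?thesis by simp
    qed
    have "\<phi> v \<le> \<phi> w + Kf * (\<Sum>i\<in>UNIV. \<bar>v $ i - w $ i\<bar>)"
      unfolding \<phi>_def by (rule fr_lip[OF x])
    moreover have "\<phi> w \<le> \<phi> v + Kf * (\<Sum>i\<in>UNIV. \<bar>w $ i - v $ i\<bar>)"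
      unfolding \<phi>_def by (rule fr_lip[OF x])
    moreover have "(\<Sum>i\<in>UNIV. \<bar>w $ i - v $ i\<bar>) = (\<Sum>i\<in>UNIV. \<bar>v $ i - w $ i\<bar>)"
      by (simp add: abs_minus_commute)
    moreover have "Kf * (\<Sum>i\<in>UNIV. \<bar>v $ i - w $ i\<bar>) \<le> Kf * (real CARD('i) * dist v w)"
      by (rule mult_left_mono[OF sd Kf_nn])
    ultimately show ?thesis unfolding dist_real_def by (simp add: abs_le_iff mult_ac)
  qed
  have cont: "continuous_on S \<phi>"
    by (rule lipschitz_on_continuous_on[where L="Kf * real CARD('i)"], rule lipschitz_onI[OF lip])
       (use Kf_nn in simp)
  have "S \<noteq> {}" using R0 memS[of 0] by auto
  then obtain v where vS: "v \<in> S" and vmin: "\<And>w. w \<in> S \<Longrightarrow> \<phi> v \<le> \<phi> w"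
    using continuous_attains_inf[OF _ _ cont] unfolding S_def by auto
  show ?thesis
  proof (intro exI[of _ "\<lambda>i. v $ i"] conjI allI impI)
    show "0 \<le> v $ i" for i using vS memS by auto
    fix l' :: "'i \<Rightarrow> real" assume l': "\<forall>i. 0 \<le> l' i"
    show "fr \<gamma> x s (\<lambda>i. v $ i) \<le> fr \<gamma> x s l'"
    proof (cases "\<forall>i. l' i \<le> R")
      case True
      then have "(\<chi> i. l' i) \<in> S" using l' memS by simp
      from vmin[OF this] show ?thesis unfolding \<phi>_def by (simp add: vec_lambda_inverse)
    next
      case False
      then obtain j where j: "R < l' j" by (auto simp: not_le)
      have "l' j \<le> (\<Sum>i\<in>UNIV. l' i)" by (rule member_le_sum) (use l' in auto)
      then have c1: "\<epsilon> * R < \<epsilon> * (\<Sum>i\<in>UNIV. l' i)" using j eps by simp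
      have c2: "\<epsilon> * R = fr \<gamma> x s (\<lambda>i. 0) + C0" unfolding R_def using eps by simp
      have z: "0 \<in> S" using memS R0 by simp
      have e0: "(($) (0::real^'i)) = (\<lambda>i. 0)" by (rule ext) simp
      have "\<phi> v \<le> fr \<gamma> x s (\<lambda>i. 0)" using vmin[OF z] e0 unfolding \<phi>_def by simp
      moreover note c1 c2
      moreover have "- C0 + \<epsilon> * (\<Sum>i\<in>UNIV. l' i) \<le> fr \<gamma> x s l'" using co[of l'] l' by simp
      ultimately show ?thesis unfolding \<phi>_def by linarith
    qed
  qed
qed

end

theorem theorem5p1:
  fixes \<pi> :: "'s::finite \<Rightarrow> 's \<Rightarrow> real"
    and A :: "(real ^ 'n) set"
    and X :: "(real ^ 'm) set"
    and \<zeta> :: "real ^ 'm \<Rightarrow> real ^ 'n \<Rightarrow> 's \<Rightarrow> real ^ 'm"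
    and p r :: "real ^ 'm \<Rightarrow> real ^ 'n \<Rightarrow> 's \<Rightarrow> real"
    and g :: "'i::finite \<Rightarrow> real ^ 'm \<Rightarrow> real ^ 'n \<Rightarrow> 's \<Rightarrow> real"
    and gbar :: "'i \<Rightarrow> real"
    and \<beta> :: real
  assumes pi_pos: "\<forall>s s'. 0 < \<pi> s s'"
    and pi_stoch: "\<forall>s. (\<Sum>s'\<in>UNIV. \<pi> s s') = 1"
    and A_fin: "finite A"
    and X_count: "countable X"
    and zeta_X: "\<forall>x\<in>X. \<forall>a\<in>A. \<forall>s. \<zeta> x a s \<in> X"
    and r_bdd: "\<exists>B. \<forall>x\<in>X. \<forall>a\<in>A. \<forall>s. \<bar>r x a s\<bar> \<le> B"
    and g_bdd: "\<forall>i. \<exists>B. \<forall>x\<in>X. \<forall>a\<in>A. \<forall>s. \<bar>g i x a s\<bar> \<le> B"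
    and beta: "0 < \<beta>" "\<beta> < 1"
    and standing: "\<forall>x0\<in>X. \<forall>s0. \<exists>a. feasible_plan A p \<zeta> \<beta> \<pi> g gbar a x0 s0"
    and slater: "\<exists>\<epsilon>>0. \<forall>s0. \<forall>x0\<in>X. \<exists>P. lottery_feasible A p \<zeta> \<beta> \<pi> g gbar P x0 s0 \<and>
                   (\<forall>i. \<epsilon> \<le> (\<integral>a. disc_cont (g i) \<zeta> \<beta> \<pi> a x0 [s0] - gbar i \<partial>P))"
  shows "\<forall>x\<in>X. \<forall>s. \<forall>\<gamma>. (\<forall>i. 0 \<le> \<gamma> i) \<longrightarrow>
           (\<exists>lam_star. (\<forall>i. 0 \<le> lam_star i) \<and>
              bellman_obj A p r g gbar \<zeta> \<beta> \<pi> \<gamma> x s lam_star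
              = (INF lam\<in>{lam. \<forall>i. 0 \<le> lam i}. bellman_obj A p r g gbar \<zeta> \<beta> \<pi> \<gamma> x s lam))"
proof -
  obtain Br where Br: "\<forall>x\<in>X. \<forall>a\<in>A. \<forall>s. \<bar>r x a s\<bar> \<le> Br" using r_bdd by blast
  obtain Bf where Bf: "\<And>i. \<forall>x\<in>X. \<forall>a\<in>A. \<forall>s. \<bar>g i x a s\<bar> \<le> Bf i" using g_bdd by metis
  define Bg where "Bg = (\<Sum>i\<in>UNIV. \<bar>Bf i\<bar>)"
  obtain \<epsilon> where eps: "\<epsilon> > 0" and sl: "\<forall>s0. \<forall>x0\<in>X. \<exists>P. lottery_feasible A p \<zeta> \<beta> \<pi> g gbar P x0 s0 \<and>
                   (\<forall>i. \<epsilon> \<le> (\<integral>a. disc_cont (g i) \<zeta> \<beta> \<pi> a x0 [s0] - gbar i \<partial>P))"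
    using slater by blast
  interpret M: M5S \<pi> A X \<zeta> p r g gbar \<beta> "\<bar>Br\<bar>" Bg \<epsilon>
  proof unfold_locales
    show "0 \<le> \<pi> s s'" for s s' using pi_pos less_imp_le by blast
    show "(\<Sum>s'\<in>UNIV. \<pi> s s') = 1" for s using pi_stoch by blast
    show "finite A" by (rule A_fin)
    show "\<zeta> x a s \<in> X" if "x \<in> X" "a \<in> A" for x a s using zeta_X that by blast
    show "\<bar>r x a s\<bar> \<le> \<bar>Br\<bar>" if "x \<in> X" "a \<in> A" for x a s
      using Br that abs_ge_self[of Br] by (meson order.trans)
    show "\<bar>g i x a s\<bar> \<le> Bg" if "x \<in> X" "a \<in> A" for i x a s
    proof -
      have "\<bar>g i x a s\<bar> \<le> Bf i" using Bf that by blast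
      also have "\<dots> \<le> \<bar>Bf i\<bar>" by simp
      also have "\<dots> \<le> Bg" unfolding Bg_def by (rule member_le_sum) auto
      finally show ?thesis .
    qed
    show "0 \<le> \<bar>Br\<bar>" by simp
    show "0 \<le> Bg" unfolding Bg_def by (simp add: sum_nonneg)
    show "0 < \<beta>" "\<beta> < 1" by (rule beta(1), rule beta(2))
    show "Atil_inf A p \<zeta> x0 \<noteq> {}" if "x0 \<in> X" for x0
      using standing that unfolding feasible_plan_def by blast
    show "0 < \<epsilon>" by (rule eps)
    show "\<exists>P. lottery_feasible A p \<zeta> \<beta> \<pi> g gbar P x0 s0 \<and>
                 (\<forall>i. \<epsilon> \<le> (\<integral>a. disc_cont (g i) \<zeta> \<beta> \<pi> a x0 [s0] - gbar i \<partial>P))" if "x0 \<in> X" for s0 x0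
      using sl that by blast
  qed
  show ?thesis
  proof (intro ballI allI impI)
    fix x s and \<gamma> :: "'i \<Rightarrow> real" assume x: "x \<in> X" and \<gamma>: "\<forall>i. 0 \<le> \<gamma> i"
    obtain l where l0: "\<forall>i. 0 \<le> l i" and lmin: "\<forall>l'. (\<forall>i. 0 \<le> l' i) \<longrightarrow> M.fr \<gamma> x s l \<le> M.fr \<gamma> x s l'"
      using M.attain[OF x, of \<gamma> s] by blast
    show "\<exists>lam_star. (\<forall>i. 0 \<le> lam_star i) \<and>
              bellman_obj A p r g gbar \<zeta> \<beta> \<pi> \<gamma> x s lam_star
              = (INF lam\<in>{lam. \<forall>i. 0 \<le> lam i}. bellman_obj A p r g gbar \<zeta> \<beta> \<pi> \<gamma> x s lam)"
    proof (intro exI conjI)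
      show "\<forall>i. 0 \<le> l i" by (rule l0)
      show "bellman_obj A p r g gbar \<zeta> \<beta> \<pi> \<gamma> x s l
              = (INF lam\<in>{lam. \<forall>i. 0 \<le> lam i}. bellman_obj A p r g gbar \<zeta> \<beta> \<pi> \<gamma> x s lam)"
      proof (rule antisym)
        show "bellman_obj A p r g gbar \<zeta> \<beta> \<pi> \<gamma> x s l
              \<le> (INF lam\<in>{lam. \<forall>i. 0 \<le> lam i}. bellman_obj A p r g gbar \<zeta> \<beta> \<pi> \<gamma> x s lam)"
        proof (rule INF_greatest)
          fix l' :: "'i \<Rightarrow> real" assume "l' \<in> {lam. \<forall>i. 0 \<le> lam i}"
          then have "M.fr \<gamma> x s l \<le> M.fr \<gamma> x s l'" using lmin by blast
          then show "bellman_obj A p r g gbar \<zeta> \<beta> \<pi> \<gamma> x s l \<le> bellman_obj A p r g gbar \<zeta> \<beta> \<pi> \<gamma> x s l'"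
            unfolding M.bellman_eq[OF x] by simp
        qed
        show "(INF lam\<in>{lam. \<forall>i. 0 \<le> lam i}. bellman_obj A p r g gbar \<zeta> \<beta> \<pi> \<gamma> x s lam)
              \<le> bellman_obj A p r g gbar \<zeta> \<beta> \<pi> \<gamma> x s l"
          by (rule INF_lower) (simp add: l0)
      qed
    qed
  qed
qed

end
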